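(* Let $k\ge 3$ and $m\ge 2$ be integers and let $\mu>0$. Then there exists $n_0$ such that for every $n\ge n_0$ there exists a $(\frac12,\mu)$-dense $k$-partite $k$-graph $H$, each of whose parts has exactly $n$ vertices, such that $\delta'_{k-1}(H)\ge(\frac12-\mu)n$ and $H$ has no $K_k(m)$-factor.
   Context: A $k$-graph $H$ has a vertex set $V(H)$ and an edge set $E(H)$ consisting of $k$-element subsets of $V(H)$. A $k$-partite $k$-graph comes with a fixed partition $V(H)=V_1\cup\dots\cup V_k$ (its parts) such that every edge meets each $V_i$ in at most one vertex. A set $S\subseteq V(H)$ is legal if $|S\cap V_i|\le 1$ for all $i$. For $S\subseteq V(H)$ with $|S|=s<k$, $\deg_H(S)$ is the number of $(k-s)$-sets $S'$ with $S\cup S'\in E(H)$. The partite minimum $s$-degree $\delta'_s(H)$ is the minimum of $\deg_H(S)$ over all legal $s$-subsets $S$. A $k$-partite $k$-graph $H$ with parts $V_1,\dots,V_k$ and $N=|V(H)|$ vertices is $(p,\mu)$-dense if for all $X_1\subseteq V_1,\dots,X_k\subseteq V_k$ we have $e_H(X_1,\dots,X_k)\ge p|X_1|\cdots|X_k|-\mu N^k$, where $e_H(X_1,\dots,X_k)$ is the number of $(x_1,\dots,x_k)\in X_1\times\dots\times X_k$ with $\{x_1,\dots,x_k\}\in E(H)$. $K_k(m)$ denotes the complete $k$-partite $k$-graph with each part of size $m$. An $F$-factor in $H$ is a set of pairwise vertex-disjoint subgraphs of $H$, each isomorphic to $F$, covering $V(H)$. *)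

theory Defs
  imports Complex_Main "HOL-Library.FuncSet"
begin

definition verts :: "nat \<Rightarrow> (nat \<Rightarrow> 'a set) \<Rightarrow> 'a set" where
  "verts k V = (\<Union>i<k. V i)"

definition kpartite_kgraph :: "nat \<Rightarrow> (nat \<Rightarrow> 'a set) \<Rightarrow> 'a set set \<Rightarrow> bool" where
  "kpartite_kgraph k V E \<longleftrightarrow>
     (\<forall>i<k. finite (V i)) \<and>
     (\<forall>i<k. \<forall>j<k. i \<noteq> j \<longrightarrow> V i \<inter> V j = {}) \<and>
     (\<forall>e\<in>E. e \<subseteq> verts k V \<and> card e = k \<and> (\<forall>i<k. card (e \<inter> V i) \<le> 1))"

definition legal :: "nat \<Rightarrow> (nat \<Rightarrow> 'a set) \<Rightarrow> 'a set \<Rightarrow> bool" where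
  "legal k V S \<longleftrightarrow> (\<forall>i<k. card (S \<inter> V i) \<le> 1)"

definition deg :: "nat \<Rightarrow> 'a set set \<Rightarrow> 'a set \<Rightarrow> nat" where
  "deg k E S = card {S'. card S' = k - card S \<and> S \<union> S' \<in> E}"

definition partite_min_deg :: "nat \<Rightarrow> (nat \<Rightarrow> 'a set) \<Rightarrow> 'a set set \<Rightarrow> nat \<Rightarrow> nat" where
  "partite_min_deg k V E s =
     Min {deg k E S | S. S \<subseteq> verts k V \<and> legal k V S \<and> card S = s}"

definition e_count :: "nat \<Rightarrow> 'a set set \<Rightarrow> (nat \<Rightarrow> 'a set) \<Rightarrow> nat" where
  "e_count k E X = card {f \<in> PiE {..<k} X. f ` {..<k} \<in> E}"

definition dense :: "nat \<Rightarrow> (nat \<Rightarrow> 'a set) \<Rightarrow> 'a set set \<Rightarrow> real \<Rightarrow> real \<Rightarrow> bool" where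
  "dense k V E p \<mu> \<longleftrightarrow>
     (\<forall>X. (\<forall>i<k. X i \<subseteq> V i) \<longrightarrow>
        real (e_count k E X) \<ge> p * (\<Prod>i<k. real (card (X i))) - \<mu> * real (card (verts k V)) ^ k)"

definition Kk_verts :: "nat \<Rightarrow> nat \<Rightarrow> (nat \<times> nat) set" where
  "Kk_verts k m = {..<k} \<times> {..<m}"

definition Kk_edges :: "nat \<Rightarrow> nat \<Rightarrow> (nat \<times> nat) set set" where
  "Kk_edges k m = {(\<lambda>i. (i, g i)) ` {..<k} | g. g \<in> {..<k} \<rightarrow> {..<m}}"

definition Kk_copy :: "nat \<Rightarrow> nat \<Rightarrow> (nat \<Rightarrow> 'a set) \<Rightarrow> 'a set set \<Rightarrow> 'a set \<Rightarrow> 'a set set \<Rightarrow> bool" where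
  "Kk_copy k m V E W F \<longleftrightarrow>
     W \<subseteq> verts k V \<and> F \<subseteq> E \<and> (\<forall>e\<in>F. e \<subseteq> W) \<and>
     (\<exists>\<phi>. bij_betw \<phi> (Kk_verts k m) W \<and>
          (\<forall>e. e \<subseteq> Kk_verts k m \<longrightarrow> (e \<in> Kk_edges k m \<longleftrightarrow> \<phi> ` e \<in> F)))"

definition has_Kk_factor :: "nat \<Rightarrow> nat \<Rightarrow> (nat \<Rightarrow> 'a set) \<Rightarrow> 'a set set \<Rightarrow> bool" where
  "has_Kk_factor k m V E \<longleftrightarrow>
     (\<exists>\<F>. (\<forall>(W,F)\<in>\<F>. Kk_copy k m V E W F) \<and>
          (\<forall>A\<in>\<F>. \<forall>B\<in>\<F>. A \<noteq> B \<longrightarrow> fst A \<inter> fst B = {}) \<and>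
          (\<Union>A\<in>\<F>. fst A) = verts k V)"

end

theory Submission
  imports Defs
begin

fun had :: "nat \<Rightarrow> nat \<Rightarrow> nat \<Rightarrow> real" where
  "had 0 x y = 1"
| "had (Suc t) x y = (if 2^t \<le> x \<and> 2^t \<le> y then -1 else 1) * had t (x mod 2^t) (y mod 2^t)"

lemma had_pm: "had t x y = 1 \<or> had t x y = -1"
  by (induction t arbitrary: x y) auto

lemma had_sq: "had t x y * had t x y = 1"
  using had_pm[of t x y] by auto

lemma had_sym: "had t x y = had t y x"
  by (induction t arbitrary: x y) auto

lemma had_0: "had t x 0 = 1"
  by (induction t arbitrary: x) auto

lemma sum_split_pow:
  fixes g :: "nat \<Rightarrow> real"
  shows "(\<Sum>x<2^Suc t. g x) = (\<Sum>x<2^t. g x) + (\<Sum>z<2^t. g (2^t + z))"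
proof -
  have "{..<(2::nat)^Suc t} = {..<2^t} \<union> {2^t..<2^t+2^t}" by auto
  moreover have "(\<Sum>x\<in>{2^t..<2^t+2^t}. g x) = (\<Sum>z<2^t. g (2^t + z))"
    by (simp add: sum.shift_bounds_nat_ivl[of g "0" "2^t" "2^t", simplified] add.commute lessThan_atLeast0)
  moreover have "sum g ({..<2^t} \<union> {2^t..<2^t+2^t}) = sum g {..<2^t} + sum g {2^t..<2^t+2^t}"
    by (rule sum.union_disjoint) auto
  ultimately show ?thesis by simp
qed

lemma had_orth:
  "y < 2^t \<Longrightarrow> y' < 2^t \<Longrightarrow> (\<Sum>x<2^t. had t x y * had t x y') = (if y = y' then 2^t else 0)"
proof (induction t arbitrary: y y')
  case 0
  then show ?case by simp
next
  case (Suc t)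
  define s :: "nat \<Rightarrow> real" where "s y = (if 2^t \<le> y then -1 else (1::real))" for y
  have lo: "had (Suc t) x y = had t x (y mod 2^t)" if "x < 2^t" for x y
    using that by simp
  have hi: "had (Suc t) (2^t + z) y = s y * had t z (y mod 2^t)" if "z < 2^t" for z y
    using that by (simp add: s_def)
  have "(\<Sum>x<2^Suc t. had (Suc t) x y * had (Suc t) x y')
      = (\<Sum>x<2^t. had t x (y mod 2^t) * had t x (y' mod 2^t))
        + (\<Sum>z<2^t. s y * s y' * (had t z (y mod 2^t) * had t z (y' mod 2^t)))"
    unfolding sum_split_pow
    by (intro arg_cong2[where f="(+)"] sum.cong) (simp_all del: had.simps add: lo hi mult_ac)
  also have "\<dots> = (1 + s y * s y') * (\<Sum>x<2^t. had t x (y mod 2^t) * had t x (y' mod 2^t))"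
    by (simp add: sum_distrib_left distrib_right sum.distrib)
  also have "\<dots> = (1 + s y * s y') * (if y mod 2^t = y' mod 2^t then 2^t else 0)"
    by (subst Suc.IH) auto
  also have "\<dots> = (if y = y' then 2^Suc t else 0)"
  proof (cases "y mod 2^t = y' mod 2^t")
    case True
    have "y = y' \<longleftrightarrow> (2^t \<le> y \<longleftrightarrow> 2^t \<le> y')"
    proof
      assume "2^t \<le> y \<longleftrightarrow> 2^t \<le> y'"
      then show "y = y'" using True Suc.prems
      proof -
        have a: "z = (if 2^t \<le> z then 2^t + z mod 2^t else z mod 2^t)" if "z < 2^Suc t" for z :: nat
          using that by (auto simp: le_mod_geq)
        show ?thesis using a[of y] a[of y'] Suc.prems True \<open>2^t \<le> y \<longleftrightarrow> 2^t \<le> y'\<close> by metis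
      qed
    qed simp
    then show ?thesis using True by (auto simp: s_def)
  qed auto
  finally show ?case .
qed

definition cl :: "nat \<Rightarrow> nat \<Rightarrow> nat \<Rightarrow> nat" where
  "cl d n j = (if j < (n div d) * d then 1 + j div (n div d) else 1 + (j - (n div d) * d))"

lemma sum_blocks:
  fixes g :: "nat \<Rightarrow> real"
  shows "(\<Sum>j<q*d. g (j div q)) = real q * (\<Sum>i<d. g i)"
proof (induction d)
  case 0 then show ?case by simp
next
  case (Suc d)
  show ?case
  proof (cases "q = 0")
    case True then show ?thesis by simp
  next
    case False
    have u: "{..<q * Suc d} = {..<q*d} \<union> {q*d..<q*d+q}" by auto
    have "(\<Sum>j\<in>{q*d..<q*d+q}. g (j div q)) = (\<Sum>j\<in>{q*d..<q*d+q}. g d)"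
    proof (rule sum.cong)
      fix j assume "j \<in> {q*d..<q*d+q}"
      then have "j div q = d" using False
        by (metis atLeastLessThan_iff div_nat_eqI mult.commute add.commute mult_Suc_right)
      then show "g (j div q) = g d" by simp
    qed simp
    then have "(\<Sum>j<q * Suc d. g (j div q)) = (\<Sum>j<q*d. g (j div q)) + real q * g d"
      unfolding u by (subst sum.union_disjoint) auto
    then show ?thesis using Suc by (simp add: algebra_simps)
  qed
qed

lemma sum_cl:
  fixes w :: "nat \<Rightarrow> real"
  assumes "0 < d"
  shows "(\<Sum>j<n. w (cl d n j)) = real (n div d) * (\<Sum>i<d. w (1+i)) + (\<Sum>i<n mod d. w (1+i))"
proof -
  define q where "q = n div d"
  define r where "r = n mod d"
  have n: "n = q*d + r" by (simp add: q_def r_def)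
  have u: "{..<n} = {..<q*d} \<union> {q*d..<q*d+r}" using n by auto
  have 1: "(\<Sum>j<q*d. w (cl d n j)) = (\<Sum>j<q*d. w (1 + j div q))"
    by (rule sum.cong) (auto simp: cl_def q_def)
  have 2: "(\<Sum>j\<in>{q*d..<q*d+r}. w (cl d n j)) = (\<Sum>j\<in>{q*d..<q*d+r}. w (1 + (j - q*d)))"
    by (rule sum.cong) (auto simp: cl_def q_def)
  have 3: "(\<Sum>j\<in>{q*d..<q*d+r}. w (1 + (j - q*d))) = (\<Sum>i<r. w (1+i))"
  proof -
    have "(\<Sum>j\<in>{q*d..<q*d+r}. w (1 + (j - q*d))) = (\<Sum>i\<in>{0..<r}. w (1 + ((i + q*d) - q*d)))"
      using sum.shift_bounds_nat_ivl[of "\<lambda>j. w (1 + (j - q*d))" 0 "q*d" r] by (simp add: add.commute)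
    then show ?thesis by (simp add: lessThan_atLeast0)
  qed
  have "(\<Sum>j<n. w (cl d n j)) = (\<Sum>j<q*d. w (cl d n j)) + (\<Sum>j\<in>{q*d..<q*d+r}. w (cl d n j))"
    unfolding u by (subst sum.union_disjoint) auto
  also have "\<dots> = real q * (\<Sum>i<d. w (1+i)) + (\<Sum>i<r. w (1+i))"
    using 1 2 3 sum_blocks[of "\<lambda>i. w (1+i)" q d] by simp
  finally show ?thesis by (simp add: q_def r_def)
qed

lemma cl_range: "0 < d \<Longrightarrow> j < n \<Longrightarrow> 1 \<le> cl d n j \<and> cl d n j \<le> d"
proof -
  assume d: "0 < d" and j: "j < n"
  show ?thesis
  proof (cases "j < (n div d) * d")
    case True
    then have "n div d > 0" by (cases "n div d") auto
    then have "j div (n div d) < d" using True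
      by (simp add: div_less_iff_less_mult mult.commute)
    then show ?thesis using True by (simp add: cl_def)
  next
    case False
    have e: "n = (n div d) * d + n mod d" by simp
    have "n mod d < d" using d by simp
    moreover have "j - (n div d)*d < n mod d" using False j e by linarith
    ultimately show ?thesis using False by (simp add: cl_def)
  qed
qed

lemma had_rowsum_full:
  assumes "y0 < 2^t" "y0 \<noteq> 0"
  shows "(\<Sum>x<2^t. had t x y0) = 0"
  using had_orth[of y0 t 0] assms by (simp add: had_0)

lemma had_rowsum_cl:
  assumes t: "1 \<le> t" and y0: "1 \<le> y0" "y0 < 2^t"
  shows "\<bar>\<Sum>j<n. had t (cl (2^t - 1) n j) y0\<bar> \<le> real (n div (2^t - 1)) + real (2^t - 1)"
proof -
  define d :: nat where "d = 2^t - 1"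
  have "2^1 \<le> (2::nat)^t" using t by (rule power_increasing) simp
  then have d0: "0 < d" unfolding d_def by simp
  have Nd: "(2::nat)^t = Suc d" unfolding d_def by simp
  have "(\<Sum>x<Suc d. had t x y0) = 0" using had_rowsum_full[of y0 t] y0 Nd by simp
  moreover have "(\<Sum>x<Suc d. had t x y0) = had t 0 y0 + (\<Sum>i<d. had t (Suc i) y0)"
    by (rule sum.lessThan_Suc_shift)
  moreover have "had t 0 y0 = 1" by (simp add: had_sym[of t 0] had_0)
  ultimately have s1: "(\<Sum>i<d. had t (1+i) y0) = -1" by simp
  have s2: "\<bar>\<Sum>i<n mod d. had t (1+i) y0\<bar> \<le> real d"
  proof -
    have "\<bar>\<Sum>i<n mod d. had t (1+i) y0\<bar> \<le> (\<Sum>i<n mod d. \<bar>had t (1+i) y0\<bar>)" by (rule sum_abs)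
    also have "\<dots> = real (n mod d)"
    proof -
      have ab: "\<bar>had t x y0\<bar> = 1" for x using had_pm[of t x y0] by auto
      show ?thesis by (simp add: ab)
    qed
    also have "\<dots> \<le> real d" using d0 by simp
    finally show ?thesis .
  qed
  have "(\<Sum>j<n. had t (cl d n j) y0) = - real (n div d) + (\<Sum>i<n mod d. had t (1+i) y0)"
    using sum_cl[OF d0, of "\<lambda>x. had t x y0" n] s1 by simp
  then show ?thesis using s2 unfolding d_def[symmetric] by linarith
qed

lemma my_CS:
  fixes a b :: "'i \<Rightarrow> real"
  shows "(\<Sum>i\<in>I. a i * b i)\<^sup>2 \<le> (\<Sum>i\<in>I. (a i)\<^sup>2) * (\<Sum>i\<in>I. (b i)\<^sup>2)"
proof (cases "(\<Sum>i\<in>I. (b i)\<^sup>2) > 0")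
  case False
  then have "(\<Sum>i\<in>I. (b i)\<^sup>2) = 0" using sum_nonneg[of I "\<lambda>i. (b i)\<^sup>2"] by force
  then have "\<forall>i\<in>I. b i = 0 \<or> infinite I" using sum_nonneg_eq_0_iff[of I "\<lambda>i. (b i)\<^sup>2"] by auto
  then show ?thesis by (cases "finite I") auto
next
  case True
  define S where "S = (\<Sum>i\<in>I. (b i)\<^sup>2)"
  define X where "X = (\<Sum>i\<in>I. a i * b i)"
  define A where "A = (\<Sum>i\<in>I. (a i)\<^sup>2)"
  have Sp: "S > 0" using True by (simp add: S_def)
  define r where "r = X / S"
  have "0 \<le> (\<Sum>i\<in>I. (a i - r * b i)\<^sup>2)" by (simp add: sum_nonneg)
  also have "\<dots> = (\<Sum>i\<in>I. (a i)\<^sup>2 - 2 * r * (a i * b i) + r\<^sup>2 * (b i)\<^sup>2)"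
    by (intro sum.cong refl) (simp add: power2_eq_square algebra_simps)
  also have "\<dots> = A - 2 * r * X + r\<^sup>2 * S"
    by (simp add: A_def X_def S_def sum.distrib sum_subtractf sum_distrib_left)
  also have "2 * r * X = 2 * (X\<^sup>2 / S)" by (simp add: r_def power2_eq_square)
  also have "r\<^sup>2 * S = X\<^sup>2 / S" using Sp by (simp add: r_def power2_eq_square)
  finally have "X\<^sup>2 / S \<le> A" by simp
  then have "X\<^sup>2 \<le> A * S" using Sp by (simp add: pos_divide_le_eq)
  then show ?thesis by (simp add: A_def X_def S_def)
qed

lemma card_as_sum: "finite A \<Longrightarrow> real (card {j\<in>A. P j}) = (\<Sum>j\<in>A. if P j then 1 else 0)"
  by (simp add: sum.inter_filter[symmetric])

lemma ind_sum_le1: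
  fixes I :: "nat set"
  assumes "finite I"
  shows "(\<Sum>i\<in>I. if 1 + i = x then (1::real) else 0) \<le> 1"
proof (cases "x = 0")
  case True then show ?thesis by simp
next
  case False
  then have "(\<Sum>i\<in>I. if 1 + i = x then (1::real) else 0) = (\<Sum>i\<in>I. if i = x - 1 then 1 else 0)"
    by (intro sum.cong) auto
  also have "\<dots> \<le> 1" using assms by simp
  finally show ?thesis .
qed

lemma cnt_le:
  assumes d: "0 < d" and A: "A \<subseteq> {..<n}"
  shows "real (card {i\<in>A. cl d n i = x}) \<le> real (n div d) + 1"
proof -
  have "card {i\<in>A. cl d n i = x} \<le> card {i\<in>{..<n}. cl d n i = x}"
    using A by (intro card_mono) auto
  then have "real (card {i\<in>A. cl d n i = x}) \<le> (\<Sum>j<n. (\<lambda>y. if y = x then 1 else 0) (cl d n j))"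
    using card_as_sum[of "{..<n}" "\<lambda>i. cl d n i = x"] by simp
  also have "\<dots> = real (n div d) * (\<Sum>i<d. if 1+i = x then 1 else 0) + (\<Sum>i<n mod d. if 1+i = x then 1 else 0)"
    by (rule sum_cl[OF d])
  also have "\<dots> \<le> real (n div d) * 1 + 1"
  proof -
    have i1: "(\<Sum>i<d. if 1+i = x then 1 else 0) \<le> (1::real)" by (rule ind_sum_le1) simp
    have i2: "(\<Sum>i<n mod d. if 1+i = x then 1 else 0) \<le> (1::real)" by (rule ind_sum_le1) simp
    show ?thesis using mult_left_mono[OF i1 of_nat_0_le_iff[of "n div d"]] i2 by linarith
  qed
  finally show ?thesis by (simp only: mult_1_right)
qed

lemma sum_group_cl:
  fixes G :: "nat \<Rightarrow> real"
  assumes d: "0 < d" and A: "A \<subseteq> {..<n}"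
  shows "(\<Sum>i\<in>A. G (cl d n i)) = (\<Sum>x<Suc d. real (card {i\<in>A. cl d n i = x}) * G x)"
proof -
  have fA: "finite A" using A by (rule finite_subset) simp
  have img: "(cl d n) ` A \<subseteq> {..<Suc d}"
  proof (rule image_subsetI)
    fix i assume "i \<in> A"
    then have "i < n" using A by auto
    then show "cl d n i \<in> {..<Suc d}" using cl_range[OF d, of i n] by simp
  qed
  have "(\<Sum>i\<in>A. G (cl d n i)) = (\<Sum>x<Suc d. \<Sum>i\<in>{i\<in>A. cl d n i = x}. G (cl d n i))"
    by (rule sum.group[OF fA _ img, symmetric]) simp
  also have "\<dots> = (\<Sum>x<Suc d. real (card {i\<in>A. cl d n i = x}) * G x)"
  proof (rule sum.cong[OF refl])
    fix x
    have "(\<Sum>i\<in>{i\<in>A. cl d n i = x}. G (cl d n i)) = (\<Sum>i\<in>{i\<in>A. cl d n i = x}. G x)"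
      by (rule sum.cong) auto
    then show "(\<Sum>i\<in>{i\<in>A. cl d n i = x}. G (cl d n i)) = real (card {i\<in>A. cl d n i = x}) * G x"
      by simp
  qed
  finally show ?thesis .
qed

lemma disc:
  assumes t: "1 \<le> t" and A: "A \<subseteq> {..<n}" and B: "B \<subseteq> {..<n}"
  shows "(\<Sum>i\<in>A. \<Sum>j\<in>B. had t (cl (2^t-1) n i) (cl (2^t-1) n j))\<^sup>2
         \<le> 2^t * (real (n div (2^t-1)) + 1)^2 * real n ^ 2"
proof -
  define d :: nat where "d = 2^t - 1"
  have "2^1 \<le> (2::nat)^t" using t by (rule power_increasing) simp
  then have d0: "0 < d" unfolding d_def by simp
  have Nd: "(2::nat)^t = Suc d" unfolding d_def by simp
  have NdR: "(2::real)^t = 1 + real d"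
  proof -
    have "(2::real)^t = real ((2::nat)^t)" by simp
    also have "\<dots> = real (Suc d)" by (simp only: Nd)
    also have "\<dots> = 1 + real d" by simp
    finally show ?thesis .
  qed
  define q where "q = real (n div d) + 1"
  define a where "a x = real (card {i\<in>A. cl d n i = x})" for x
  define b where "b x = real (card {i\<in>B. cl d n i = x})" for x
  define c where "c x = (\<Sum>y<Suc d. b y * had t x y)" for x
  have fA: "finite A" using A finite_subset by blast
  have fB: "finite B" using B finite_subset by blast
  have cdef: "(\<Sum>j\<in>B. had t x (cl d n j)) = c x" for x
    unfolding c_def b_def by (rule sum_group_cl[OF d0 B])
  have D: "(\<Sum>i\<in>A. \<Sum>j\<in>B. had t (cl d n i) (cl d n j)) = (\<Sum>x<Suc d. a x * c x)"
    unfolding cdef a_def by (rule sum_group_cl[OF d0 A])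
  have suma: "(\<Sum>x<Suc d. a x) = real (card A)"
  proof -
    have "(\<Sum>i\<in>A. (1::real)) = (\<Sum>x<Suc d. a x * 1)" unfolding a_def by (rule sum_group_cl[OF d0 A])
    then show ?thesis by simp
  qed
  have sumb: "(\<Sum>x<Suc d. b x) = real (card B)"
  proof -
    have "(\<Sum>i\<in>B. (1::real)) = (\<Sum>x<Suc d. b x * 1)" unfolding b_def by (rule sum_group_cl[OF d0 B])
    then show ?thesis by simp
  qed
  have a_le: "a x \<le> q" for x unfolding a_def q_def by (rule cnt_le[OF d0 A])
  have b_le: "b x \<le> q" for x unfolding b_def q_def by (rule cnt_le[OF d0 B])
  have a_ge: "0 \<le> a x" for x by (simp add: a_def)
  have b_ge: "0 \<le> b x" for x by (simp add: b_def)
  have cardA: "real (card A) \<le> real n" using A card_mono[of "{..<n}" A] by simp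
  have cardB: "real (card B) \<le> real n" using B card_mono[of "{..<n}" B] by simp
  have sa2: "(\<Sum>x<Suc d. (a x)\<^sup>2) \<le> q * real n"
  proof -
    have "(\<Sum>x<Suc d. (a x)\<^sup>2) \<le> (\<Sum>x<Suc d. q * a x)"
      by (intro sum_mono) (simp add: power2_eq_square a_ge a_le mult_right_mono)
    also have "\<dots> = q * real (card A)" by (simp only: sum_distrib_left[symmetric] suma)
    also have "\<dots> \<le> q * real n" using cardA by (intro mult_left_mono) (auto simp: q_def)
    finally show ?thesis .
  qed
  have sb2: "(\<Sum>x<Suc d. (b x)\<^sup>2) \<le> q * real n"
  proof -
    have "(\<Sum>x<Suc d. (b x)\<^sup>2) \<le> (\<Sum>x<Suc d. q * b x)"
      by (intro sum_mono) (simp add: power2_eq_square b_ge b_le mult_right_mono)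
    also have "\<dots> = q * real (card B)" by (simp only: sum_distrib_left[symmetric] sumb)
    also have "\<dots> \<le> q * real n" using cardB by (intro mult_left_mono) (auto simp: q_def)
    finally show ?thesis .
  qed
  have sc2: "(\<Sum>x<Suc d. (c x)\<^sup>2) = real (Suc d) * (\<Sum>y<Suc d. (b y)\<^sup>2)"
  proof -
    define K where "K = {..<Suc d}"
    have fK: "finite K" by (simp add: K_def)
    have cK: "c x = (\<Sum>y\<in>K. b y * had t x y)" for x by (simp add: c_def K_def)
    have e1: "(c x)\<^sup>2 = (\<Sum>y\<in>K. \<Sum>y'\<in>K. b y * b y' * (had t x y * had t x y'))" for x
      unfolding cK power2_eq_square sum_product by (intro sum.cong refl) (simp add: mult_ac)
    have "(\<Sum>x\<in>K. (c x)\<^sup>2) = (\<Sum>x\<in>K. \<Sum>y\<in>K. \<Sum>y'\<in>K. b y * b y' * (had t x y * had t x y'))"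
      by (simp only: e1)
    also have "\<dots> = (\<Sum>y\<in>K. \<Sum>x\<in>K. \<Sum>y'\<in>K. b y * b y' * (had t x y * had t x y'))"
      by (rule sum.swap)
    also have "\<dots> = (\<Sum>y\<in>K. \<Sum>y'\<in>K. \<Sum>x\<in>K. b y * b y' * (had t x y * had t x y'))"
      by (rule sum.cong[OF refl], rule sum.swap)
    also have "\<dots> = (\<Sum>y\<in>K. \<Sum>y'\<in>K. b y * b y' * (if y = y' then real (Suc d) else 0))"
    proof (intro sum.cong refl)
      fix y y' assume "y \<in> K" "y' \<in> K"
      then have "(\<Sum>x\<in>K. had t x y * had t x y') = (if y = y' then real (Suc d) else 0)"
        using had_orth[of y t y'] unfolding K_def Nd NdR by simp
      then show "(\<Sum>x\<in>K. b y * b y' * (had t x y * had t x y')) = b y * b y' * (if y = y' then real (Suc d) else 0)"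
        by (simp only: sum_distrib_left[symmetric])
    qed
    also have "\<dots> = (\<Sum>y\<in>K. real (Suc d) * (b y)\<^sup>2)"
      using fK by (intro sum.cong refl) (simp add: power2_eq_square mult_ac if_distrib cong: if_cong)
    also have "\<dots> = real (Suc d) * (\<Sum>y\<in>K. (b y)\<^sup>2)"
      by (simp only: sum_distrib_left)
    finally show ?thesis by (simp only: K_def)
  qed
  have "(\<Sum>x<Suc d. a x * c x)\<^sup>2 \<le> (\<Sum>x<Suc d. (a x)\<^sup>2) * (\<Sum>x<Suc d. (c x)\<^sup>2)"
    by (rule my_CS)
  also have "\<dots> \<le> (q * real n) * (real (Suc d) * (q * real n))"
  proof -
    have h1: "real (Suc d) * (\<Sum>y<Suc d. (b y)\<^sup>2) \<le> real (Suc d) * (q * real n)"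
      by (rule mult_left_mono[OF sb2]) simp
    have h2: "0 \<le> q * real n" by (simp add: q_def)
    have h3: "0 \<le> real (Suc d) * (\<Sum>y<Suc d. (b y)\<^sup>2)" by (simp add: sum_nonneg)
    show ?thesis unfolding sc2 by (rule mult_mono[OF sa2 h1 h2 h3])
  qed
  also have "(q * real n) * (real (Suc d) * (q * real n)) = 2^t * q^2 * real n ^ 2"
    unfolding NdR by (simp add: power2_eq_square)
  finally have fin: "(\<Sum>x<Suc d. a x * c x)\<^sup>2 \<le> 2^t * q^2 * real n ^ 2" .
  have D': "(\<Sum>i\<in>A. \<Sum>j\<in>B. had t (cl (2^t-1) n i) (cl (2^t-1) n j)) = (\<Sum>x<Suc d. a x * c x)"
    using D by (simp only: d_def)
  have qeq: "q = real (n div (2^t-1)) + 1" by (simp only: q_def d_def)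
  show ?thesis using fin by (simp only: D' qeq)
qed

definition Vp :: "nat \<Rightarrow> nat \<Rightarrow> nat set" where
  "Vp n i = {i*n..<i*n+n}"

definition epsv :: "nat \<Rightarrow> nat \<Rightarrow> nat \<Rightarrow> real" where
  "epsv n b v = (if v mod n < b then -1 else 1)"

definition mmv :: "nat \<Rightarrow> nat \<Rightarrow> nat \<Rightarrow> nat \<Rightarrow> real" where
  "mmv n t u w = had t (cl (2^t-1) n (u mod n)) (cl (2^t-1) n (w mod n))"

definition sgf :: "nat \<Rightarrow> nat \<Rightarrow> nat \<Rightarrow> nat \<Rightarrow> (nat \<Rightarrow> nat) \<Rightarrow> real" where
  "sgf k n t b f = mmv n t (f 1) (f 2) * (\<Prod>i\<in>{..<k}-{1,2}. epsv n b (f i))"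

definition Eg :: "nat \<Rightarrow> nat \<Rightarrow> nat \<Rightarrow> nat \<Rightarrow> nat set set" where
  "Eg k n t b = {f ` {..<k} | f. f \<in> PiE {..<k} (Vp n) \<and> sgf k n t b f = 1}"

lemma Vp_disj: "i \<noteq> j \<Longrightarrow> Vp n i \<inter> Vp n j = {}"
proof -
  assume ij: "i \<noteq> j"
  show ?thesis
  proof (cases "i < j")
    case True
    then have "i*n + n \<le> j*n" by (metis Suc_leI mult_Suc mult_le_mono1 add.commute)
    then show ?thesis unfolding Vp_def by auto
  next
    case False
    then have "j < i" using ij by simp
    then have "j*n + n \<le> i*n" by (metis Suc_leI mult_Suc mult_le_mono1 add.commute)
    then show ?thesis unfolding Vp_def by auto
  qed
qed

lemma Vp_mem_eq: "v \<in> Vp n i \<Longrightarrow> v \<in> Vp n j \<Longrightarrow> i = j"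
  using Vp_disj[of i j n] by blast

lemma card_Vp: "card (Vp n i) = n"
  by (simp add: Vp_def)

lemma finite_Vp: "finite (Vp n i)"
  by (simp add: Vp_def)

lemma Vp_mod: "v \<in> Vp n i \<Longrightarrow> v mod n = v - i*n \<and> v div n = i"
proof -
  assume v: "v \<in> Vp n i"
  then have a: "i*n \<le> v" "v < i*n+n" by (auto simp: Vp_def)
  then have "v = i*n + (v - i*n)" "v - i*n < n" by auto
  then show ?thesis
    by (metis add.commute add_cancel_right_left div_mult_self1 div_less mod_mult_self1 mod_less not_less0 gr_implies_not0 less_nat_zero_code)
qed

lemma Vp_inj_mod: "inj_on (\<lambda>v. v mod n) (Vp n i)"
proof (rule inj_onI)
  fix u v assume "u \<in> Vp n i" "v \<in> Vp n i" "u mod n = v mod n"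
  moreover have "u = i*n + u mod n" "v = i*n + v mod n"
    using \<open>u \<in> Vp n i\<close> \<open>v \<in> Vp n i\<close> Vp_mod[of u n i] Vp_mod[of v n i] by (auto simp: Vp_def)
  ultimately show "u = v" by simp
qed

lemma Vp_mod_img: "(\<lambda>v. v mod n) ` Vp n i = {..<n}"
proof
  show "(\<lambda>v. v mod n) ` Vp n i \<subseteq> {..<n}"
    using Vp_mod[of _ n i] by (auto simp: Vp_def)
  show "{..<n} \<subseteq> (\<lambda>v. v mod n) ` Vp n i"
  proof
    fix j assume j: "j \<in> {..<n}"
    then have "i*n + j \<in> Vp n i" by (simp add: Vp_def)
    moreover have "(i*n + j) mod n = j" using j by simp
    ultimately show "j \<in> (\<lambda>v. v mod n) ` Vp n i" by (metis image_eqI)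
  qed
qed

lemma verts_Vp: "0 < n \<Longrightarrow> verts k (Vp n) = {..<k*n}"
proof
  assume n: "0 < n"
  show "verts k (Vp n) \<subseteq> {..<k*n}"
  proof
    fix v assume "v \<in> verts k (Vp n)"
    then obtain i where "i < k" "v \<in> Vp n i" by (auto simp: verts_def)
    then have "v < i*n + n" "Suc i \<le> k" by (auto simp: Vp_def)
    moreover have "i*n + n \<le> k*n" using \<open>Suc i \<le> k\<close> by (metis mult_Suc mult_le_mono1 add.commute)
    ultimately show "v \<in> {..<k*n}" by simp
  qed
  show "{..<k*n} \<subseteq> verts k (Vp n)"
  proof
    fix v assume "v \<in> {..<k*n}"
    then have v: "v < k*n" by simp
    define i where "i = v div n"
    have "i < k" using v n by (simp add: i_def div_less_iff_less_mult)
    moreover have "v \<in> Vp n i" using n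
      by (simp add: Vp_def i_def) (metis add.commute mod_less_divisor div_mult_mod_eq add_less_cancel_left mult.commute le_add2)
    ultimately show "v \<in> verts k (Vp n)" by (auto simp: verts_def)
  qed
qed

lemma PiE_inj:
  assumes "f \<in> PiE I (Vp n)" "i \<in> I" "j \<in> I" "f i = f j"
  shows "i = j"
  using assms Vp_mem_eq[of "f i" n i j] by (auto simp: PiE_def Pi_def)

lemma PiE_inj_on: "f \<in> PiE I (Vp n) \<Longrightarrow> inj_on f I"
  by (auto intro: inj_onI PiE_inj)

lemma PiE_img_eq:
  assumes f: "f \<in> PiE I (Vp n)" and g: "g \<in> PiE I (Vp n)" and e: "f ` I = g ` I"
  shows "f = g"
proof (rule PiE_ext[OF f g])
  fix i assume i: "i \<in> I"
  then have "f i \<in> g ` I" using e by auto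
  then obtain j where j: "j \<in> I" "f i = g j" by auto
  have "f i \<in> Vp n i" using f i by auto
  moreover have "g j \<in> Vp n j" using g j by auto
  ultimately have "i = j" using j Vp_mem_eq by metis
  then show "f i = g i" using j by simp
qed

lemma PiE_img_Int:
  assumes f: "f \<in> PiE I (Vp n)" and i: "i \<in> I"
  shows "f ` I \<inter> Vp n i = {f i}"
proof
  show "f ` I \<inter> Vp n i \<subseteq> {f i}"
  proof
    fix v assume "v \<in> f ` I \<inter> Vp n i"
    then obtain j where j: "j \<in> I" "v = f j" "v \<in> Vp n i" by auto
    have "f j \<in> Vp n j" using f j by auto
    then have "j = i" using j Vp_mem_eq by metis
    then show "v \<in> {f i}" using j by simp
  qed
  show "{f i} \<subseteq> f ` I \<inter> Vp n i" using f i by auto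
qed

lemma pm_abs: "\<bar>x::real\<bar> = 1 \<Longrightarrow> x = 1 \<or> x = -1" by auto

lemma had_abs: "\<bar>had t x y\<bar> = 1" using had_pm[of t x y] by auto

lemma sgf_pm: "sgf k n t b f = 1 \<or> sgf k n t b f = -1"
proof (rule pm_abs)
  have "\<bar>\<Prod>i\<in>{..<k}-{1,2}. epsv n b (f i)\<bar> = (\<Prod>i\<in>{..<k}-{1,2}. \<bar>epsv n b (f i)\<bar>)"
    by (rule abs_prod)
  also have "\<dots> = 1" by (intro prod.neutral) (simp add: epsv_def)
  finally show "\<bar>sgf k n t b f\<bar> = 1" by (simp add: sgf_def abs_mult mmv_def had_abs)
qed

lemma pm_count:
  fixes h :: "'x \<Rightarrow> real"
  assumes "finite A" "\<forall>x\<in>A. h x = 1 \<or> h x = -1" "s = 1 \<or> s = -1"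
  shows "2 * real (card {x\<in>A. h x = s}) = real (card A) + s * (\<Sum>x\<in>A. h x)"
  using assms
proof (induction A rule: finite_induct)
  case empty then show ?case by simp
next
  case (insert a F)
  have c: "{x \<in> insert a F. h x = s} = (if h a = s then insert a {x\<in>F. h x = s} else {x\<in>F. h x = s})"
    by auto
  have fF: "finite {x\<in>F. h x = s}" using insert by simp
  have an: "a \<notin> {x\<in>F. h x = s}" using insert by simp
  show ?case using insert c fF an
    by (cases "h a = s") (auto simp: algebra_simps card_insert_if)
qed

lemma kp: "kpartite_kgraph k (Vp n) (Eg k n t b)"
  unfolding kpartite_kgraph_def
proof (intro conjI ballI allI impI)
  fix i show "finite (Vp n i)" by (rule finite_Vp)
next
  fix i j assume "i < k" "j < k" "i \<noteq> j" then show "Vp n i \<inter> Vp n j = {}" by (simp add: Vp_disj)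
next
  fix e assume "e \<in> Eg k n t b"
  then obtain f where f: "f \<in> PiE {..<k} (Vp n)" "e = f ` {..<k}" by (auto simp: Eg_def)
  show "e \<subseteq> verts k (Vp n)" using f by (auto simp: verts_def)
  show "card e = k" using f PiE_inj_on[OF f(1)] by (simp add: card_image)
  fix i assume i: "i < k"
  have "e \<inter> Vp n i = {f i}" using f PiE_img_Int[OF f(1)] i by simp
  then show "card (e \<inter> Vp n i) \<le> 1" by simp
qed

lemma sum_split12:
  fixes F :: "nat \<Rightarrow> nat \<Rightarrow> real" and w :: "nat \<Rightarrow> real" and X :: "nat \<Rightarrow> nat set"
  assumes k: "3 \<le> k"
  shows "(\<Sum>f\<in>PiE {..<k} X. F (f 1) (f 2) * (\<Prod>i\<in>{..<k}-{1,2}. w (f i)))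
       = (\<Sum>p\<in>X 1 \<times> X 2. F (fst p) (snd p)) * (\<Sum>g\<in>PiE ({..<k}-{1,2}) X. \<Prod>i\<in>{..<k}-{1,2}. w (g i))"
proof -
  define I :: "nat set" where "I = {..<k} - {1, 2}"
  have k12: "(1::nat) < k" "(2::nat) < k" "Suc 0 < k" using k by auto
  have "(\<Sum>f\<in>PiE {..<k} X. F (f 1) (f 2) * (\<Prod>i\<in>I. w (f i)))
      = (\<Sum>q\<in>(X 1 \<times> X 2) \<times> PiE I X. F (fst (fst q)) (snd (fst q)) * (\<Prod>i\<in>I. w (snd q i)))"
  proof -
    have h1: "(restrict f I)(1 := f 1, 2 := f 2) = f" if f: "f \<in> PiE {..<k} X" for f
    proof (rule ext)
      fix x show "((restrict f I)(1 := f 1, 2 := f 2)) x = f x"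
        using f by (cases "x < k") (auto simp: I_def PiE_def extensional_def)
    qed
    have h2: "restrict (g(1 := a, 2 := c)) I = g" if g: "g \<in> PiE I X" for g a c
    proof (rule ext)
      fix x show "restrict (g(1 := a, 2 := c)) I x = g x"
        using g by (auto simp: I_def PiE_def extensional_def)
    qed
    have h3: "g(1 := a, 2 := c) \<in> PiE {..<k} X" if g: "g \<in> PiE I X" and a: "a \<in> X 1" and c: "c \<in> X 2" for g a c
    proof -
      have ge: "g \<in> extensional I" using g by (simp add: PiE_iff)
      have A: "\<forall>i\<in>{..<k}. (g(1 := a, 2 := c)) i \<in> X i"
      proof
        fix i assume i: "i \<in> {..<k}"
        show "(g(1 := a, 2 := c)) i \<in> X i"
        proof (cases "i = 1 \<or> i = 2")
          case True then show ?thesis using a c by auto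
        next
          case False
          then have iI: "i \<in> I" using i by (simp add: I_def)
          have "g i \<in> X i" by (rule PiE_mem[OF g iI])
          then show ?thesis using False by simp
        qed
      qed
      have B: "g(1 := a, 2 := c) \<in> extensional {..<k}"
        unfolding extensional_def
      proof (intro CollectI allI impI)
        fix x assume x: "x \<notin> {..<k}"
        have x1: "x \<noteq> 1" using x k12 by auto
        have x2: "x \<noteq> 2" using x k12 by auto
        have x3: "x \<notin> I" using x unfolding I_def by simp
        have "g x = undefined" by (rule extensional_arb[OF ge x3])
        then show "(g(1 := a, 2 := c)) x = undefined" using x1 x2 by simp
      qed
      show ?thesis using A B by (simp only: PiE_iff)
    qed
    have h4: "((f 1, f 2), restrict f I) \<in> (X 1 \<times> X 2) \<times> PiE I X" if f: "f \<in> PiE {..<k} X" for f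
    proof -
      have a: "f 1 \<in> X 1" by (rule PiE_mem[OF f]) (simp add: k12)
      have b: "f 2 \<in> X 2" by (rule PiE_mem[OF f]) (simp add: k12)
      have c: "restrict f I \<in> PiE I X" unfolding restrict_PiE_iff
      proof
        fix i assume "i \<in> I"
        then have "i \<in> {..<k}" by (simp add: I_def)
        then show "f i \<in> X i" by (rule PiE_mem[OF f])
      qed
      show ?thesis using a b c by simp
    qed
    have h5: "(\<Prod>i\<in>I. w (restrict f I i)) = (\<Prod>i\<in>I. w (f i))" for f
      by (rule prod.cong) auto
    show ?thesis
      apply (rule sum.reindex_bij_witness[where j = "\<lambda>f. ((f 1, f 2), restrict f I)"
                                        and i = "\<lambda>q. (snd q)(1 := fst (fst q), 2 := snd (fst q))"])
      subgoal for f using h1 by simp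
      subgoal for f using h4 by simp
      subgoal for q using h2[of "snd q" "fst (fst q)" "snd (fst q)"] by (cases q) (auto simp: mem_Times_iff)
      subgoal for q using h3[of "snd q" "fst (fst q)" "snd (fst q)"] by (auto simp: mem_Times_iff)
      subgoal for f using h5 by simp
      done
  qed
  also have "\<dots> = (\<Sum>p\<in>X 1 \<times> X 2. \<Sum>g\<in>PiE I X. F (fst p) (snd p) * (\<Prod>i\<in>I. w (g i)))"
    by (subst sum.cartesian_product) (simp add: case_prod_beta)
  also have "\<dots> = (\<Sum>p\<in>X 1 \<times> X 2. F (fst p) (snd p)) * (\<Sum>g\<in>PiE I X. \<Prod>i\<in>I. w (g i))"
    by (simp add: sum_product)
  finally show ?thesis by (simp only: I_def)
qed

lemma disc_abs:
  assumes t: "1 \<le> t" and A: "A \<subseteq> {..<n}" and B: "B \<subseteq> {..<n}" and mu: "0 \<le> \<mu>"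
    and H: "2^t * (real (n div (2^t-1)) + 1)^2 \<le> \<mu>^2 * real n ^ 2"
  shows "\<bar>\<Sum>i\<in>A. \<Sum>j\<in>B. had t (cl (2^t-1) n i) (cl (2^t-1) n j)\<bar> \<le> \<mu> * real n ^ 2"
proof -
  define D where "D = (\<Sum>i\<in>A. \<Sum>j\<in>B. had t (cl (2^t-1) n i) (cl (2^t-1) n j))"
  have "D\<^sup>2 \<le> 2^t * (real (n div (2^t-1)) + 1)^2 * real n ^ 2"
    unfolding D_def by (rule disc[OF t A B])
  also have "\<dots> \<le> \<mu>^2 * real n ^ 2 * real n ^ 2"
    by (rule mult_right_mono[OF H]) simp
  also have "\<dots> = (\<mu> * real n ^ 2)\<^sup>2" by (simp add: power2_eq_square)
  finally have "\<bar>D\<bar>\<^sup>2 \<le> (\<mu> * real n ^ 2)\<^sup>2" by simp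
  then have "\<bar>D\<bar> \<le> \<mu> * real n ^ 2"
    by (rule power2_le_imp_le) (simp add: mu)
  then show ?thesis by (simp add: D_def)
qed

lemma sum_mod_reindex:
  fixes G :: "nat \<Rightarrow> real"
  assumes X: "X \<subseteq> Vp n i"
  shows "(\<Sum>a\<in>X. G (a mod n)) = (\<Sum>j\<in>(\<lambda>v. v mod n) ` X. G j)"
proof -
  have "inj_on (\<lambda>v. v mod n) X" using Vp_inj_mod[of n i] X by (rule inj_on_subset)
  then show ?thesis by (simp add: sum.reindex)
qed

lemma mod_img_sub: "X \<subseteq> Vp n i \<Longrightarrow> (\<lambda>v. v mod n) ` X \<subseteq> {..<n}"
  using Vp_mod_img[of n i] by blast

lemma dens:
  assumes n: "0 < n" and k: "3 \<le> k" and t: "1 \<le> t" and mu: "0 < \<mu>"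
    and H: "2^t * (real (n div (2^t-1)) + 1)^2 \<le> \<mu>^2 * real n ^ 2"
  shows "dense k (Vp n) (Eg k n t b) (1/2) \<mu>"
  unfolding dense_def
proof (intro allI impI)
  fix X assume X: "\<forall>i<k. X i \<subseteq> Vp n i"
  define P where "P = PiE {..<k} X"
  define I :: "nat set" where "I = {..<k} - {1, 2}"
  have k12: "(1::nat) < k" "(2::nat) < k" using k by auto
  have finX: "finite (X i)" if "i < k" for i
    using X that finite_Vp[of n i] finite_subset by blast
  have fP: "finite P" unfolding P_def by (rule finite_PiE) (simp_all add: finX)
  have PV: "f \<in> PiE {..<k} (Vp n)" if "f \<in> P" for f
    using that X unfolding P_def PiE_iff by blast
  have seteq: "{f \<in> P. f ` {..<k} \<in> Eg k n t b} = {f \<in> P. sgf k n t b f = 1}"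
  proof (intro Collect_cong conj_cong refl iffI)
    fix f assume f: "f \<in> P" and "f ` {..<k} \<in> Eg k n t b"
    then obtain g where g: "g \<in> PiE {..<k} (Vp n)" "f ` {..<k} = g ` {..<k}" "sgf k n t b g = 1"
      unfolding Eg_def by blast
    have "f = g" by (rule PiE_img_eq[OF PV[OF f] g(1) g(2)])
    then show "sgf k n t b f = 1" using g by simp
  next
    fix f assume f: "f \<in> P" and "sgf k n t b f = 1"
    then show "f ` {..<k} \<in> Eg k n t b" unfolding Eg_def using PV[OF f] by blast
  qed
  have ec: "e_count k (Eg k n t b) X = card {f \<in> P. sgf k n t b f = 1}"
    unfolding e_count_def P_def[symmetric] seteq ..
  have two: "2 * real (card {f \<in> P. sgf k n t b f = 1}) = real (card P) + 1 * (\<Sum>f\<in>P. sgf k n t b f)"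
    by (rule pm_count[OF fP]) (auto simp: sgf_pm)
  have cP: "real (card P) = (\<Prod>i<k. real (card (X i)))"
    unfolding P_def by (simp add: card_PiE)
  have split: "(\<Sum>f\<in>P. sgf k n t b f)
     = (\<Sum>p\<in>X 1 \<times> X 2. mmv n t (fst p) (snd p)) * (\<Sum>g\<in>PiE I X. \<Prod>i\<in>I. epsv n b (g i))"
    unfolding P_def I_def sgf_def by (rule sum_split12[OF k])
  have b1: "\<bar>\<Sum>p\<in>X 1 \<times> X 2. mmv n t (fst p) (snd p)\<bar> \<le> \<mu> * real n ^ 2"
  proof -
    have X1: "X 1 \<subseteq> Vp n 1" and X2: "X 2 \<subseteq> Vp n 2" using X k12 by auto
    have "(\<Sum>p\<in>X 1 \<times> X 2. mmv n t (fst p) (snd p)) = (\<Sum>a\<in>X 1. \<Sum>c\<in>X 2. mmv n t a c)"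
      by (simp add: sum.cartesian_product case_prod_beta)
    also have "\<dots> = (\<Sum>a\<in>X 1. \<Sum>j\<in>(\<lambda>v. v mod n) ` X 2. had t (cl (2^t-1) n (a mod n)) (cl (2^t-1) n j))"
      unfolding mmv_def by (intro sum.cong refl sum_mod_reindex[OF X2])
    also have "\<dots> = (\<Sum>i\<in>(\<lambda>v. v mod n) ` X 1. \<Sum>j\<in>(\<lambda>v. v mod n) ` X 2. had t (cl (2^t-1) n i) (cl (2^t-1) n j))"
      by (rule sum_mod_reindex[OF X1])
    finally show ?thesis
      using disc_abs[OF t mod_img_sub[OF X1] mod_img_sub[OF X2] _ H] mu by simp
  qed
  have b2: "\<bar>\<Sum>g\<in>PiE I X. \<Prod>i\<in>I. epsv n b (g i)\<bar> \<le> real n ^ (k - 2)"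
  proof -
    have fI: "finite I" by (simp add: I_def)
    have cI: "card I = k - 2"
    proof -
      have "card I = card {..<k} - card {1::nat, 2}" unfolding I_def
        by (rule card_Diff_subset) (use k12 in auto)
      then show ?thesis by simp
    qed
    have "\<bar>\<Sum>g\<in>PiE I X. \<Prod>i\<in>I. epsv n b (g i)\<bar> \<le> (\<Sum>g\<in>PiE I X. \<bar>\<Prod>i\<in>I. epsv n b (g i)\<bar>)"
      by (rule sum_abs)
    also have "\<dots> = (\<Sum>g\<in>PiE I X. 1)"
    proof (rule sum.cong[OF refl])
      fix g
      have "\<bar>\<Prod>i\<in>I. epsv n b (g i)\<bar> = (\<Prod>i\<in>I. \<bar>epsv n b (g i)\<bar>)" by (rule abs_prod)
      also have "\<dots> = 1" by (intro prod.neutral) (simp add: epsv_def)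
      finally show "\<bar>\<Prod>i\<in>I. epsv n b (g i)\<bar> = 1" .
    qed
    also have "\<dots> = real (card (PiE I X))" by simp
    also have "\<dots> = (\<Prod>i\<in>I. real (card (X i)))" using fI by (simp add: card_PiE)
    also have "\<dots> \<le> (\<Prod>i\<in>I. real n)"
    proof (rule prod_mono)
      fix i assume "i \<in> I"
      then have "i < k" by (simp add: I_def)
      then have "card (X i) \<le> card (Vp n i)" using X finite_Vp by (intro card_mono) auto
      then show "0 \<le> real (card (X i)) \<and> real (card (X i)) \<le> real n" by (simp add: card_Vp)
    qed
    also have "\<dots> = real n ^ (k - 2)" using cI by simp
    finally show ?thesis .
  qed
  have Sb: "\<bar>\<Sum>f\<in>P. sgf k n t b f\<bar> \<le> \<mu> * real n ^ k"
  proof -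
    have "\<bar>\<Sum>f\<in>P. sgf k n t b f\<bar> \<le> (\<mu> * real n ^ 2) * real n ^ (k - 2)"
      unfolding split abs_mult by (rule mult_mono[OF b1 b2]) (use mu in auto)
    also have "\<dots> = \<mu> * real n ^ k"
    proof -
      have e: "2 + (k - 2) = k" using k by simp
      have "real n ^ (2 + (k - 2)) = real n ^ 2 * real n ^ (k - 2)" by (rule power_add)
      then have "real n ^ 2 * real n ^ (k - 2) = real n ^ k" unfolding e by simp
      then show ?thesis by (simp add: mult.assoc)
    qed
    finally show ?thesis .
  qed
  have nk: "real n ^ k \<le> real (card (verts k (Vp n))) ^ k"
  proof -
    have "card (verts k (Vp n)) = k * n" using verts_Vp[OF n] by simp
    moreover have "real n \<le> real (k * n)"
    proof -
      have "1 * n \<le> k * n" using k by (intro mult_le_mono1) simp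
      then have "n \<le> k * n" by simp
      then show ?thesis by (rule of_nat_mono)
    qed
    ultimately show ?thesis by (intro power_mono) simp_all
  qed
  have E2: "2 * real (e_count k (Eg k n t b) X) = real (card P) + (\<Sum>f\<in>P. sgf k n t b f)"
    using ec two by simp
  have L: "- (\<mu> * real n ^ k) \<le> (\<Sum>f\<in>P. sgf k n t b f)" using Sb by (simp only: abs_le_iff) linarith
  have M: "\<mu> * real n ^ k \<le> \<mu> * real (card (verts k (Vp n))) ^ k"
    using mult_left_mono[OF nk, of \<mu>] mu by simp
  have M0: "0 \<le> \<mu> * real n ^ k" using mu by simp
  show "1 / 2 * (\<Prod>i<k. real (card (X i))) - \<mu> * real (card (verts k (Vp n))) ^ k
                    \<le> real (e_count k (Eg k n t b) X)" using E2 L M M0 cP by linarith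
qed

lemma card_transfer:
  "card {v \<in> Vp n j. Q (v mod n)} = card {i \<in> {..<n}. Q i}"
proof -
  have inj: "inj_on (\<lambda>v. v mod n) {v \<in> Vp n j. Q (v mod n)}"
    by (rule inj_on_subset[OF Vp_inj_mod]) auto
  have img: "(\<lambda>v. v mod n) ` {v \<in> Vp n j. Q (v mod n)} = {i \<in> {..<n}. Q i}"
  proof
    show "(\<lambda>v. v mod n) ` {v \<in> Vp n j. Q (v mod n)} \<subseteq> {i \<in> {..<n}. Q i}"
      using Vp_mod_img[of n j] by blast
    show "{i \<in> {..<n}. Q i} \<subseteq> (\<lambda>v. v mod n) ` {v \<in> Vp n j. Q (v mod n)}"
    proof
      fix i assume i: "i \<in> {i \<in> {..<n}. Q i}"
      have i1: "i < n" and i2: "Q i" using i by auto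
      have m: "(j*n + i) mod n = i" using i1 by simp
      have "j*n + i \<in> Vp n j" using i1 by (simp add: Vp_def)
      then have "j*n + i \<in> {v \<in> Vp n j. Q (v mod n)}" using i2 m by simp
      then have "(j*n + i) mod n \<in> (\<lambda>v. v mod n) ` {v \<in> Vp n j. Q (v mod n)}" by (rule imageI)
      then show "i \<in> (\<lambda>v. v mod n) ` {v \<in> Vp n j. Q (v mod n)}" using m by simp
    qed
  qed
  show ?thesis using card_image[OF inj] img by simp
qed

lemma cnt_eps_neg: "b \<le> n \<Longrightarrow> card {v \<in> Vp n j. epsv n b v = -1} = b"
proof -
  assume b: "b \<le> n"
  have "{v \<in> Vp n j. epsv n b v = -1} = {v \<in> Vp n j. v mod n < b}" by (auto simp: epsv_def)
  then have "card {v \<in> Vp n j. epsv n b v = -1} = card {i \<in> {..<n}. i < b}"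
    using card_transfer[of n j "\<lambda>i. i < b"] by simp
  also have "{i \<in> {..<n}. i < b} = {..<b}" using b by auto
  finally show ?thesis by simp
qed

lemma cnt_eps_pos: "b \<le> n \<Longrightarrow> card {v \<in> Vp n j. epsv n b v = 1} = n - b"
proof -
  assume b: "b \<le> n"
  have "{v \<in> Vp n j. epsv n b v = 1} = {v \<in> Vp n j. \<not> v mod n < b}" by (auto simp: epsv_def)
  then have "card {v \<in> Vp n j. epsv n b v = 1} = card {i \<in> {..<n}. \<not> i < b}"
    using card_transfer[of n j "\<lambda>i. \<not> i < b"] by simp
  also have "{i \<in> {..<n}. \<not> i < b} = {b..<n}" by auto
  finally show ?thesis by simp
qed

lemma cnt_had:
  assumes t: "1 \<le> t" and y0: "1 \<le> y0" "y0 < 2^t" and be: "\<beta> = 1 \<or> \<beta> = -1"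
  shows "2 * real (card {i \<in> {..<n}. had t (cl (2^t-1) n i) y0 = \<beta>})
           \<ge> real n - (real (n div (2^t - 1)) + real (2^t - 1))"
proof -
  have "2 * real (card {i \<in> {..<n}. had t (cl (2^t-1) n i) y0 = \<beta>})
      = real (card {..<n}) + \<beta> * (\<Sum>i<n. had t (cl (2^t-1) n i) y0)"
    by (rule pm_count) (auto simp: had_pm be)
  moreover have "\<bar>\<beta> * (\<Sum>i<n. had t (cl (2^t-1) n i) y0)\<bar> \<le> real (n div (2^t - 1)) + real (2^t - 1)"
    using had_rowsum_cl[OF t y0] be by (auto simp: abs_mult)
  ultimately show ?thesis by (simp add: abs_le_iff)
qed

lemma pm_mult_eq1: "(a::real) = 1 \<or> a = -1 \<Longrightarrow> (x * a = 1 \<longleftrightarrow> x = a)"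
proof -
  assume "a = 1 \<or> a = -1"
  then show ?thesis
  proof
    assume "a = 1" then show ?thesis by simp
  next
    assume a: "a = -1"
    have "x * a = - x" by (simp add: a)
    then show ?thesis using a by linarith
  qed
qed

lemma cl_mod_range:
  assumes t: "1 \<le> t" and n: "0 < n"
  shows "1 \<le> cl (2^t-1) n (u mod n) \<and> cl (2^t-1) n (u mod n) < 2^t"
proof -
  have "2^1 \<le> (2::nat)^t" using t by (rule power_increasing) simp
  then have d0: "0 < (2::nat)^t - 1" by simp
  have "u mod n < n" using n by simp
  from cl_range[OF d0 this] have "1 \<le> cl (2^t-1) n (u mod n)" "cl (2^t-1) n (u mod n) \<le> 2^t - 1" by auto
  then show ?thesis using d0 by linarith
qed

lemma eps_pm: "epsv n b v = 1 \<or> epsv n b v = -1" by (simp add: epsv_def)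

lemma prod_eps_pm: "(\<Prod>i\<in>A. epsv n b (g i)) = 1 \<or> (\<Prod>i\<in>A. epsv n b (g i)) = -1"
proof (rule pm_abs)
  have "\<bar>\<Prod>i\<in>A. epsv n b (g i)\<bar> = (\<Prod>i\<in>A. \<bar>epsv n b (g i)\<bar>)" by (rule abs_prod)
  also have "\<dots> = 1" by (intro prod.neutral) (simp add: epsv_def)
  finally show "\<bar>\<Prod>i\<in>A. epsv n b (g i)\<bar> = 1" .
qed

lemma mmv_pm: "mmv n t u w = 1 \<or> mmv n t u w = -1" by (simp add: mmv_def had_pm)

lemma count_good:
  assumes n: "0 < n" and k: "3 \<le> k" and t: "1 \<le> t" and j: "j < k"
    and R: "real (n div (2^t-1)) + real (2^t-1) \<le> 2 * \<mu> * real n"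
    and B1: "(1/2 - \<mu>) * real n \<le> real b" and B2: "(1/2 - \<mu>) * real n \<le> real n - real b"
    and bn: "b \<le> n"
    and g: "\<forall>i\<in>{..<k}-{j}. g i \<in> Vp n i"
  shows "(1/2 - \<mu>) * real n \<le> real (card {v \<in> Vp n j. sgf k n t b (restrict (g(j := v)) {..<k}) = 1})"
proof -
  define I :: "nat set" where "I = {..<k} - {1, 2}"
  define h where "h v = restrict (g(j := v)) {..<k}" for v
  have hI: "h v i = (if i = j then v else g i)" if "i < k" for v i
    using that by (simp add: h_def)
  have k12: "(1::nat) < k" "(2::nat) < k" using k by auto
  have sg: "sgf k n t b (h v) = mmv n t (h v 1) (h v 2) * (\<Prod>i\<in>I. epsv n b (h v i))" for v
    by (simp add: sgf_def I_def)
  show ?thesis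
  proof (cases "j \<in> I")
    case True
    then have j12: "j \<noteq> 1" "j \<noteq> 2" by (auto simp: I_def)
    define \<alpha> where "\<alpha> = mmv n t (g 1) (g 2) * (\<Prod>i\<in>I-{j}. epsv n b (g i))"
    have apm: "\<alpha> = 1 \<or> \<alpha> = -1" unfolding \<alpha>_def
      using mmv_pm[of n t "g 1" "g 2"] prod_eps_pm[of n b g "I-{j}"] by auto
    have sgv: "sgf k n t b (h v) = epsv n b v * \<alpha>" for v
    proof -
      have "(\<Prod>i\<in>I. epsv n b (h v i)) = epsv n b (h v j) * (\<Prod>i\<in>I-{j}. epsv n b (h v i))"
        using True by (simp add: I_def prod.remove)
      also have "(\<Prod>i\<in>I-{j}. epsv n b (h v i)) = (\<Prod>i\<in>I-{j}. epsv n b (g i))"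
        by (rule prod.cong) (auto simp: I_def hI)
      finally have "(\<Prod>i\<in>I. epsv n b (h v i)) = epsv n b v * (\<Prod>i\<in>I-{j}. epsv n b (g i))"
        using j by (simp add: hI)
      moreover have "h v 1 = g 1" "h v 2 = g 2" using j12 k12 by (simp_all add: hI)
      ultimately show ?thesis unfolding sg \<alpha>_def by (simp add: mult_ac)
    qed
    have "{v \<in> Vp n j. sgf k n t b (h v) = 1} = {v \<in> Vp n j. epsv n b v = \<alpha>}"
      unfolding sgv using pm_mult_eq1[OF apm] by auto
    moreover have "(1/2 - \<mu>) * real n \<le> real (card {v \<in> Vp n j. epsv n b v = \<alpha>})"
      using apm cnt_eps_neg[OF bn, of j] cnt_eps_pos[OF bn, of j] B1 B2 bn by (auto simp: of_nat_diff)
    ultimately show ?thesis unfolding h_def by simp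
  next
    case False
    then have j12: "j = 1 \<or> j = 2" using j by (auto simp: I_def)
    define \<beta> where "\<beta> = (\<Prod>i\<in>I. epsv n b (g i))"
    have bpm: "\<beta> = 1 \<or> \<beta> = -1" unfolding \<beta>_def by (rule prod_eps_pm)
    have pr: "(\<Prod>i\<in>I. epsv n b (h v i)) = \<beta>" for v
      unfolding \<beta>_def using False by (intro prod.cong) (auto simp: I_def hI)
    define oo where "oo = (if j = 1 then 2 else (1::nat))"
    have oo: "oo < k" "oo \<noteq> j" using k12 j12 by (auto simp: oo_def)
    have go: "g oo \<in> Vp n oo" using g oo by auto
    define y0 where "y0 = cl (2^t-1) n (g oo mod n)"
    have y0: "1 \<le> y0" "y0 < 2^t" using cl_mod_range[OF t n] by (auto simp: y0_def)
    have mv: "mmv n t (h v 1) (h v 2) = had t (cl (2^t-1) n (v mod n)) y0" for v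
      using j12 k12 by (auto simp: hI mmv_def y0_def oo_def had_sym)
    have "{v \<in> Vp n j. sgf k n t b (h v) = 1} = {v \<in> Vp n j. had t (cl (2^t-1) n (v mod n)) y0 = \<beta>}"
      unfolding sg pr mv using pm_mult_eq1[OF bpm] by auto
    then have "card {v \<in> Vp n j. sgf k n t b (h v) = 1} = card {i \<in> {..<n}. had t (cl (2^t-1) n i) y0 = \<beta>}"
      using card_transfer[of n j "\<lambda>i. had t (cl (2^t-1) n i) y0 = \<beta>"] by simp
    moreover have "2 * real (card {i \<in> {..<n}. had t (cl (2^t-1) n i) y0 = \<beta>})
           \<ge> real n - (real (n div (2^t - 1)) + real (2^t - 1))"
      by (rule cnt_had[OF t y0 bpm])
    ultimately show ?thesis using R unfolding h_def by (simp add: algebra_simps)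
  qed
qed

lemma E_sub_verts: "e \<in> Eg k n t b \<Longrightarrow> e \<subseteq> verts k (Vp n)"
  using kp[of k n t b] unfolding kpartite_kgraph_def by blast

lemma legal_struct:
  assumes n: "0 < n" and S: "S \<subseteq> verts k (Vp n)" and L: "legal k (Vp n) S" and c: "card S = k - 1"
    and k: "1 \<le> k"
  shows "\<exists>j<k. S \<inter> Vp n j = {} \<and> (\<forall>i<k. i \<noteq> j \<longrightarrow> (\<exists>v. S \<inter> Vp n i = {v}))"
proof -
  have fV: "finite (verts k (Vp n))" using verts_Vp[OF n] by simp
  have fS: "finite S" using S fV by (rule finite_subset)
  have SU: "S = (\<Union>i\<in>{..<k}. S \<inter> Vp n i)" using S by (auto simp: verts_def)
  have cS: "card S = (\<Sum>i<k. card (S \<inter> Vp n i))"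
  proof -
    have "card (\<Union>i\<in>{..<k}. S \<inter> Vp n i) = (\<Sum>i<k. card (S \<inter> Vp n i))"
      by (rule card_UN_disjoint) (use fS Vp_disj in auto)
    then show ?thesis using SU by simp
  qed
  define Z where "Z = {i \<in> {..<k}. S \<inter> Vp n i = {}}"
  have ci: "card (S \<inter> Vp n i) = (if i \<in> Z then 0 else 1)" if i: "i < k" for i
  proof -
    have le: "card (S \<inter> Vp n i) \<le> 1" using L i by (simp add: legal_def)
    have fi: "finite (S \<inter> Vp n i)" using fS by simp
    show ?thesis
    proof (cases "i \<in> Z")
      case True then show ?thesis by (simp add: Z_def)
    next
      case False
      then have "S \<inter> Vp n i \<noteq> {}" using i by (simp add: Z_def)
      then have "card (S \<inter> Vp n i) \<noteq> 0" using fi by simp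
      then show ?thesis using le False by simp
    qed
  qed
  have "real (card {i \<in> {..<k}. i \<notin> Z}) = (\<Sum>i<k. if i \<notin> Z then 1 else 0)"
    by (rule card_as_sum) simp
  also have "\<dots> = (\<Sum>i<k. real (card (S \<inter> Vp n i)))"
    by (rule sum.cong) (auto simp: ci)
  also have "\<dots> = real (card S)" using cS by simp
  finally have "card {i \<in> {..<k}. i \<notin> Z} = k - 1" using c by linarith
  moreover have "{i \<in> {..<k}. i \<notin> Z} = {..<k} - Z" by auto
  moreover have "card ({..<k} - Z) = k - card Z"
  proof -
    have fZ: "finite Z" by (simp add: Z_def)
    have "Z \<subseteq> {..<k}" by (auto simp: Z_def)
    then have "card ({..<k} - Z) = card {..<k} - card Z" by (rule card_Diff_subset[OF fZ])
    then show ?thesis by simp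
  qed
  moreover have "card Z \<le> k" using card_mono[of "{..<k}" Z] by (auto simp: Z_def)
  ultimately have "card Z = 1" using k by simp
  then obtain j where Zj: "Z = {j}" using card_1_singleton_iff by (metis One_nat_def)
  then have j: "j < k" "S \<inter> Vp n j = {}" by (auto simp: Z_def)
  have "\<forall>i<k. i \<noteq> j \<longrightarrow> (\<exists>v. S \<inter> Vp n i = {v})"
  proof (intro allI impI)
    fix i assume i: "i < k" "i \<noteq> j"
    then have "i \<notin> Z" using Zj by simp
    then have "card (S \<inter> Vp n i) = 1" using ci[OF i(1)] by simp
    then show "\<exists>v. S \<inter> Vp n i = {v}" by (simp add: card_1_singleton_iff)
  qed
  then show ?thesis using j by blast
qed

lemma main_bound:
  assumes n: "0 < n" and k: "3 \<le> k" and t: "1 \<le> t"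
    and R: "real (n div (2^t-1)) + real (2^t-1) \<le> 2 * \<mu> * real n"
    and B1: "(1/2 - \<mu>) * real n \<le> real b" and B2: "(1/2 - \<mu>) * real n \<le> real n - real b"
    and bn: "b \<le> n"
    and S: "S \<subseteq> verts k (Vp n)" and L: "legal k (Vp n) S" and c: "card S = k - 1"
  shows "(1/2 - \<mu>) * real n \<le> real (deg k (Eg k n t b) S)"
proof -
  obtain j where j: "j < k" "S \<inter> Vp n j = {}" and oth: "\<forall>i<k. i \<noteq> j \<longrightarrow> (\<exists>v. S \<inter> Vp n i = {v})"
    using legal_struct[OF n S L c] k by auto
  have "\<forall>i\<in>{..<k}-{j}. \<exists>v. S \<inter> Vp n i = {v}" using oth by auto
  then obtain g where g: "\<forall>i\<in>{..<k}-{j}. S \<inter> Vp n i = {g i}" by metis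
  have gV: "\<forall>i\<in>{..<k}-{j}. g i \<in> Vp n i" using g by blast
  define G where "G = {v \<in> Vp n j. sgf k n t b (restrict (g(j := v)) {..<k}) = 1}"
  have img: "(restrict (g(j := v)) {..<k}) ` {..<k} = insert v S" if v: "v \<in> Vp n j" for v
  proof
    show "(restrict (g(j := v)) {..<k}) ` {..<k} \<subseteq> insert v S"
    proof
      fix x assume "x \<in> (restrict (g(j := v)) {..<k}) ` {..<k}"
      then obtain i where i: "i < k" "x = (if i = j then v else g i)" by auto
      show "x \<in> insert v S"
      proof (cases "i = j")
        case True then show ?thesis using i by simp
      next
        case False
        then have "S \<inter> Vp n i = {g i}" using g i by auto
        then show ?thesis using i False by auto
      qed
    qed
    show "insert v S \<subseteq> (restrict (g(j := v)) {..<k}) ` {..<k}"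
    proof
      fix x assume x: "x \<in> insert v S"
      show "x \<in> (restrict (g(j := v)) {..<k}) ` {..<k}"
      proof (cases "x = v")
        case True
        then have "x = (restrict (g(j := v)) {..<k}) j" using j by simp
        then show ?thesis using j by blast
      next
        case False
        then have "x \<in> S" using x by simp
        then obtain i where i: "i < k" "x \<in> Vp n i" using S by (auto simp: verts_def)
        have ij: "i \<noteq> j" using i j \<open>x \<in> S\<close> by auto
        then have "S \<inter> Vp n i = {g i}" using g i by auto
        then have "x = g i" using i \<open>x \<in> S\<close> by auto
        then have "x = (restrict (g(j := v)) {..<k}) i" using i ij by simp
        then show ?thesis using i by blast
      qed
    qed
  qed
  have inPi: "restrict (g(j := v)) {..<k} \<in> PiE {..<k} (Vp n)" if v: "v \<in> Vp n j" for v
    using gV v by (auto simp: PiE_iff)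
  have inE: "insert v S \<in> Eg k n t b" if v: "v \<in> G" for v
  proof -
    have "v \<in> Vp n j" "sgf k n t b (restrict (g(j := v)) {..<k}) = 1" using v by (auto simp: G_def)
    then show ?thesis unfolding Eg_def using img inPi by blast
  qed
  have km: "k - card S = 1" using c k by simp
  define D where "D = {S'. card S' = k - card S \<and> S \<union> S' \<in> Eg k n t b}"
  have sub: "(\<lambda>v. {v}) ` G \<subseteq> D"
    unfolding D_def km using inE by auto
  have fV: "finite (verts k (Vp n))" using verts_Vp[OF n] by simp
  have fD: "finite D"
  proof (rule finite_subset)
    show "D \<subseteq> Pow (verts k (Vp n))" unfolding D_def using E_sub_verts by blast
  qed (use fV in simp)
  have "card G = card ((\<lambda>v. {v}) ` G)" by (simp add: card_image)
  also have "\<dots> \<le> card D" by (rule card_mono[OF fD sub])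
  finally have "card G \<le> deg k (Eg k n t b) S" by (simp add: deg_def D_def)
  moreover have "(1/2 - \<mu>) * real n \<le> real (card G)"
    unfolding G_def by (rule count_good[OF n k t j(1) R B1 B2 bn gV])
  ultimately show ?thesis by linarith
qed

lemma codeg:
  assumes n: "0 < n" and k: "3 \<le> k" and t: "1 \<le> t"
    and R: "real (n div (2^t-1)) + real (2^t-1) \<le> 2 * \<mu> * real n"
    and B1: "(1/2 - \<mu>) * real n \<le> real b" and B2: "(1/2 - \<mu>) * real n \<le> real n - real b"
    and bn: "b \<le> n"
  shows "(1/2 - \<mu>) * real n \<le> real (partite_min_deg k (Vp n) (Eg k n t b) (k - 1))"
proof -
  define SS where "SS = {S. S \<subseteq> verts k (Vp n) \<and> legal k (Vp n) S \<and> card S = k - 1}"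
  have eq: "partite_min_deg k (Vp n) (Eg k n t b) (k - 1) = Min (deg k (Eg k n t b) ` SS)"
    unfolding partite_min_deg_def SS_def by (simp only: setcompr_eq_image)
  have fV: "finite (verts k (Vp n))" using verts_Vp[OF n] by simp
  have fSS: "finite SS" by (rule finite_subset[of _ "Pow (verts k (Vp n))"]) (use fV in \<open>auto simp: SS_def\<close>)
  define g0 where "g0 = restrict (\<lambda>i. i * n) {..<k}"
  have g0P: "g0 \<in> PiE {..<k} (Vp n)" using n by (simp add: g0_def Vp_def PiE_iff)
  define S0 where "S0 = g0 ` ({..<k} - {0})"
  have S0: "S0 \<in> SS"
  proof -
    have "S0 \<subseteq> verts k (Vp n)" using g0P by (auto simp: S0_def verts_def PiE_iff)
    moreover have "legal k (Vp n) S0" unfolding legal_def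
    proof (intro allI impI)
      fix i assume i: "i < k"
      have "S0 \<inter> Vp n i \<subseteq> g0 ` {..<k} \<inter> Vp n i" by (auto simp: S0_def)
      also have "\<dots> = {g0 i}" using PiE_img_Int[OF g0P] i by simp
      finally show "card (S0 \<inter> Vp n i) \<le> 1" using card_mono[of "{g0 i}" "S0 \<inter> Vp n i"] by simp
    qed
    moreover have "card S0 = k - 1"
    proof -
      have "inj_on g0 ({..<k} - {0})" using PiE_inj_on[OF g0P] by (rule inj_on_subset) auto
      then have "card S0 = card ({..<k} - {0::nat})" by (simp add: S0_def card_image)
      also have "\<dots> = k - 1" using k by (simp add: card_Diff_subset)
      finally show ?thesis .
    qed
    ultimately show ?thesis by (simp add: SS_def)
  qed
  have ne: "deg k (Eg k n t b) ` SS \<noteq> {}" using S0 by blast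
  have "Min (deg k (Eg k n t b) ` SS) \<in> deg k (Eg k n t b) ` SS"
    by (rule Min_in) (use fSS ne in auto)
  then obtain S where S: "S \<in> SS" and mS: "Min (deg k (Eg k n t b) ` SS) = deg k (Eg k n t b) S" by auto
  have "(1/2 - \<mu>) * real n \<le> real (deg k (Eg k n t b) S)"
    using S unfolding SS_def by (intro main_bound[OF n k t R B1 B2 bn]) auto
  then show ?thesis using eq mS by simp
qed

definition Bs :: "nat \<Rightarrow> nat \<Rightarrow> nat set" where
  "Bs n b = {v \<in> Vp n 0. epsv n b v = -1}"

lemma swap:
  assumes k: "3 \<le> k"
    and e: "e \<in> Eg k n t b" and e': "insert u' (e - {u}) \<in> Eg k n t b"
    and u: "u \<in> e" and uB: "u \<in> Bs n b" and uu: "u \<noteq> u'"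
  shows "u' \<in> Bs n b"
proof -
  obtain f where f: "f \<in> PiE {..<k} (Vp n)" "e = f ` {..<k}" "sgf k n t b f = 1"
    using e unfolding Eg_def by blast
  obtain f' where f': "f' \<in> PiE {..<k} (Vp n)" "insert u' (e - {u}) = f' ` {..<k}" "sgf k n t b f' = 1"
    using e' unfolding Eg_def by blast
  have u0: "u \<in> Vp n 0" using uB by (simp add: Bs_def)
  have k0: "0 < k" using k by simp
  have fu: "f 0 = u"
  proof -
    obtain p where p: "p < k" "u = f p" using u f by auto
    have "f p \<in> Vp n p" using f(1) p(1) by auto
    then have "p = 0" using u0 p Vp_mem_eq by metis
    then show ?thesis using p by simp
  qed
  obtain q where q: "q < k" "u' = f' q" using f'(2) by (metis imageE insertI1 lessThan_iff)
  have cf': "card (f' ` {..<k}) = k" using PiE_inj_on[OF f'(1)] by (simp add: card_image)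
  have cf: "card e = k" using PiE_inj_on[OF f(1)] f(2) by (simp add: card_image)
  have fine: "finite e" using f(2) by simp
  have q0: "q = 0"
  proof (rule ccontr)
    assume q0: "q \<noteq> 0"
    have fq: "f q \<in> e" using f(2) q(1) by auto
    have "f q \<noteq> u" using fu PiE_inj[OF f(1), of q 0] q k0 q0 by auto
    then have "f q \<in> f' ` {..<k}" using fq f'(2) by auto
    then obtain r where r: "r < k" "f q = f' r" by auto
    have "f q \<in> Vp n q" using f(1) q(1) by auto
    moreover have "f' r \<in> Vp n r" using f'(1) r(1) by auto
    ultimately have "r = q" using r Vp_mem_eq by metis
    then have "u' \<in> e" using r q fq by simp
    then have "insert u' (e - {u}) = e - {u}" using uu by auto
    then have "card (f' ` {..<k}) = card e - 1" using f'(2) u fine by (simp add: card_Diff_singleton)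
    then show False using cf' cf k by simp
  qed
  have u'0: "u' \<in> Vp n 0" using f'(1) q q0 by auto
  have same: "f' i = f i" if i: "i < k" "i \<noteq> 0" for i
  proof -
    have fi: "f i \<in> e" using f(2) i(1) by auto
    have "f i \<noteq> u" using fu PiE_inj[OF f(1), of i 0] i k0 by auto
    then have "f i \<in> f' ` {..<k}" using fi f'(2) by auto
    then obtain r where r: "r < k" "f i = f' r" by auto
    have "f i \<in> Vp n i" using f(1) i(1) by auto
    moreover have "f' r \<in> Vp n r" using f'(1) r(1) by auto
    ultimately have "r = i" using r Vp_mem_eq by metis
    then show ?thesis using r by simp
  qed
  have k12: "1 < k \<or> True" by simp
  define I :: "nat set" where "I = {..<k} - {1, 2}"
  have decomp: "sgf k n t b h = epsv n b (h 0) * (mmv n t (h 1) (h 2) * (\<Prod>i\<in>I-{0}. epsv n b (h i)))" for h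
  proof -
    have "0 \<in> I" using k0 by (simp add: I_def)
    moreover have "finite I" by (simp add: I_def)
    ultimately have "(\<Prod>i\<in>I. epsv n b (h i)) = epsv n b (h 0) * (\<Prod>i\<in>I-{0}. epsv n b (h i))"
      by (intro prod.remove)
    then show ?thesis by (simp add: sgf_def I_def mult_ac)
  qed
  have rest: "mmv n t (f' 1) (f' 2) * (\<Prod>i\<in>I-{0}. epsv n b (f' i))
            = mmv n t (f 1) (f 2) * (\<Prod>i\<in>I-{0}. epsv n b (f i))"
  proof -
    have a1: "f' 1 = f 1" using same[of 1] k by simp
    have a2: "f' 2 = f 2" using same[of 2] k by simp
    have a3: "(\<Prod>i\<in>I-{0}. epsv n b (f' i)) = (\<Prod>i\<in>I-{0}. epsv n b (f i))"
    proof (rule prod.cong[OF refl])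
      fix i assume "i \<in> I - {0}"
      then have "i < k" "i \<noteq> 0" by (auto simp: I_def)
      then show "epsv n b (f' i) = epsv n b (f i)" using same by simp
    qed
    show ?thesis by (simp only: a1 a2 a3)
  qed
  define R where "R = mmv n t (f 1) (f 2) * (\<Prod>i\<in>I-{0}. epsv n b (f i))"
  have "epsv n b u * R = 1" using f(3) decomp[of f] fu by (simp add: R_def)
  moreover have "epsv n b u' * R = 1" using f'(3) decomp[of f'] rest q q0 by (simp add: R_def)
  ultimately have "epsv n b u' = epsv n b u"
    by (metis mult_cancel_right mult_zero_left zero_neq_one)
  then show ?thesis using uB u'0 by (simp add: Bs_def)
qed

lemma class_mono:
  assumes k: "3 \<le> k" and m: "0 < m"
    and bij: "bij_betw \<phi> (Kk_verts k m) W" and FE: "F \<subseteq> Eg k n t b"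
    and edg: "\<forall>e. e \<subseteq> Kk_verts k m \<longrightarrow> (e \<in> Kk_edges k m \<longleftrightarrow> \<phi> ` e \<in> F)"
    and c: "c < k" and a: "a < m" and a': "a' < m" and B: "\<phi> (c, a) \<in> Bs n b"
  shows "\<phi> (c, a') \<in> Bs n b"
proof (cases "a = a'")
  case True then show ?thesis using B by simp
next
  case False
  define T :: "nat \<Rightarrow> (nat \<times> nat) set" where "T x = (\<lambda>i. (i, if i = c then x else 0)) ` {..<k}" for x
  have Tsub: "T x \<subseteq> Kk_verts k m" if "x < m" for x
    using that m by (auto simp: T_def Kk_verts_def)
  have Tedge: "T x \<in> Kk_edges k m" if "x < m" for x
  proof -
    have "(\<lambda>i. if i = c then x else 0) \<in> {..<k} \<rightarrow> {..<m}" using that m by auto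
    then show ?thesis unfolding Kk_edges_def T_def
      apply (rule_tac CollectI)
      apply (rule_tac x="\<lambda>i. if i = c then x else 0" in exI)
      by simp
  qed
  have TE: "\<phi> ` T x \<in> Eg k n t b" if "x < m" for x
    using edg Tsub[OF that] Tedge[OF that] FE by blast
  have Teq: "T a' = insert (c, a') (T a - {(c, a)})"
    using c False by (auto simp: T_def image_iff)
  have inj: "inj_on \<phi> (Kk_verts k m)" using bij by (simp add: bij_betw_def)
  have ca: "(c, a) \<in> Kk_verts k m" "(c, a') \<in> Kk_verts k m" using c a a' by (auto simp: Kk_verts_def)
  have "\<phi> ` T a' = insert (\<phi> (c, a')) (\<phi> ` (T a - {(c, a)}))" unfolding Teq by simp
  also have "\<phi> ` (T a - {(c, a)}) = \<phi> ` T a - \<phi> ` {(c, a)}"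
    by (rule inj_on_image_set_diff[OF inj]) (use Tsub[OF a] ca in auto)
  finally have e': "\<phi> ` T a' = insert (\<phi> (c, a')) (\<phi> ` T a - {\<phi> (c, a)})" by simp
  have "(c, a) \<in> T a" unfolding T_def using c by (intro image_eqI[where x=c]) auto
  then have uin: "\<phi> (c, a) \<in> \<phi> ` T a" by (rule imageI)
  have une: "\<phi> (c, a) \<noteq> \<phi> (c, a')" using inj ca False by (auto dest: inj_onD)
  show ?thesis
    by (rule swap[OF k TE[OF a] _ uin B une]) (use TE[OF a'] e' in simp)
qed

lemma copy_dvd:
  assumes k: "3 \<le> k" and m: "0 < m" and C: "Kk_copy k m (Vp n) (Eg k n t b) W F"
  shows "m dvd card (W \<inter> Bs n b)"
proof -
  obtain \<phi> where bij: "bij_betw \<phi> (Kk_verts k m) W"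
    and edg: "\<forall>e. e \<subseteq> Kk_verts k m \<longrightarrow> (e \<in> Kk_edges k m \<longleftrightarrow> \<phi> ` e \<in> F)"
    using C unfolding Kk_copy_def by blast
  have FE: "F \<subseteq> Eg k n t b" using C unfolding Kk_copy_def by blast
  have Wim: "W = \<phi> ` Kk_verts k m" using bij by (simp add: bij_betw_imp_surj_on)
  have inj: "inj_on \<phi> (Kk_verts k m)" using bij by (simp add: bij_betw_def)
  define Cs where "Cs = {c \<in> {..<k}. \<phi> (c, 0) \<in> Bs n b}"
  define K where "K c = \<phi> ` ({c} \<times> {..<m})" for c
  have Ksub: "{c} \<times> {..<m} \<subseteq> Kk_verts k m" if "c < k" for c
    using that by (auto simp: Kk_verts_def)
  have cm: "\<phi> (c, a') \<in> Bs n b" if "c < k" "a < m" "a' < m" "\<phi> (c, a) \<in> Bs n b" for c a a'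
    by (rule class_mono[OF k m bij FE edg that])
  have eq: "W \<inter> Bs n b = (\<Union>c\<in>Cs. K c)"
  proof
    show "W \<inter> Bs n b \<subseteq> (\<Union>c\<in>Cs. K c)"
    proof
      fix w assume w: "w \<in> W \<inter> Bs n b"
      then obtain c a where ca: "c < k" "a < m" "w = \<phi> (c, a)" using Wim by (auto simp: Kk_verts_def)
      have "\<phi> (c, 0) \<in> Bs n b" using cm[OF ca(1) ca(2) m] w ca(3) by simp
      then have "c \<in> Cs" using ca by (simp add: Cs_def)
      moreover have "w \<in> K c" using ca by (auto simp: K_def)
      ultimately show "w \<in> (\<Union>c\<in>Cs. K c)" by blast
    qed
    show "(\<Union>c\<in>Cs. K c) \<subseteq> W \<inter> Bs n b"
    proof
      fix w assume "w \<in> (\<Union>c\<in>Cs. K c)"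
      then obtain c a where ca: "c \<in> Cs" "a < m" "w = \<phi> (c, a)" by (auto simp: K_def)
      have c: "c < k" "\<phi> (c, 0) \<in> Bs n b" using ca by (auto simp: Cs_def)
      have "w \<in> Bs n b" using cm[OF c(1) m ca(2) c(2)] ca(3) by simp
      moreover have "w \<in> W" using Wim ca c by (auto simp: Kk_verts_def)
      ultimately show "w \<in> W \<inter> Bs n b" by simp
    qed
  qed
  have cK: "card (K c) = m" if "c < k" for c
  proof -
    have "inj_on \<phi> ({c} \<times> {..<m})" using inj Ksub[OF that] by (rule inj_on_subset)
    then show ?thesis by (simp add: K_def card_image card_cartesian_product)
  qed
  have "card (\<Union>c\<in>Cs. K c) = (\<Sum>c\<in>Cs. card (K c))"
  proof (rule card_UN_disjoint)
    show "finite Cs" by (simp add: Cs_def)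
    show "\<forall>c\<in>Cs. finite (K c)" by (simp add: K_def)
    show "\<forall>c\<in>Cs. \<forall>c'\<in>Cs. c \<noteq> c' \<longrightarrow> K c \<inter> K c' = {}"
    proof (intro ballI impI)
      fix c c' assume cc: "c \<in> Cs" "c' \<in> Cs" "c \<noteq> c'"
      have "K c \<inter> K c' = \<phi> ` (({c} \<times> {..<m}) \<inter> ({c'} \<times> {..<m}))"
        unfolding K_def using cc by (intro inj_on_image_Int[OF inj, symmetric] Ksub) (auto simp: Cs_def)
      then show "K c \<inter> K c' = {}" using cc by auto
    qed
  qed
  also have "\<dots> = (\<Sum>c\<in>Cs. m)" by (rule sum.cong) (auto simp: Cs_def cK)
  finally have "card (W \<inter> Bs n b) = card Cs * m" using eq by simp
  then show ?thesis by simp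
qed

lemma nofactor:
  assumes n: "0 < n" and k: "3 \<le> k" and m: "0 < m" and nd: "\<not> m dvd b" and bn: "b \<le> n"
  shows "\<not> has_Kk_factor k m (Vp n) (Eg k n t b)"
proof
  assume "has_Kk_factor k m (Vp n) (Eg k n t b)"
  then obtain \<F> where cop: "\<forall>(W, F)\<in>\<F>. Kk_copy k m (Vp n) (Eg k n t b) W F"
    and dis: "\<forall>A\<in>\<F>. \<forall>B\<in>\<F>. A \<noteq> B \<longrightarrow> fst A \<inter> fst B = {}"
    and cov: "(\<Union>A\<in>\<F>. fst A) = verts k (Vp n)"
    unfolding has_Kk_factor_def by blast
  define \<W> where "\<W> = fst ` \<F>"
  have Wc: "\<exists>F. Kk_copy k m (Vp n) (Eg k n t b) W F" if Wm: "W \<in> \<W>" for W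
  proof -
    obtain A where A: "A \<in> \<F>" "W = fst A" using Wm unfolding \<W>_def by blast
    obtain F where "A = (W, F)" using A by (metis prod.collapse)
    then show ?thesis using cop A by auto
  qed
  have fV: "finite (verts k (Vp n))" using verts_Vp[OF n] by simp
  have Wsub: "\<W> \<subseteq> Pow (verts k (Vp n))"
    using Wc unfolding Kk_copy_def by blast
  have fW: "finite \<W>" using Wsub fV by (rule finite_subset[OF _ finite_Pow_iff[THEN iffD2]])
  have Bsub: "Bs n b \<subseteq> verts k (Vp n)"
  proof
    fix x assume "x \<in> Bs n b"
    then have "x \<in> Vp n 0" by (simp add: Bs_def)
    moreover have "(0::nat) \<in> {..<k}" using k by simp
    ultimately show "x \<in> verts k (Vp n)" unfolding verts_def by blast
  qed
  have BU: "Bs n b = (\<Union>W\<in>\<W>. W \<inter> Bs n b)" using Bsub cov by (auto simp: \<W>_def)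
  have "card (\<Union>W\<in>\<W>. W \<inter> Bs n b) = (\<Sum>W\<in>\<W>. card (W \<inter> Bs n b))"
  proof (rule card_UN_disjoint)
    show "finite \<W>" by (rule fW)
    show "\<forall>W\<in>\<W>. finite (W \<inter> Bs n b)" by (simp add: Bs_def finite_Vp)
    show "\<forall>W\<in>\<W>. \<forall>W'\<in>\<W>. W \<noteq> W' \<longrightarrow> W \<inter> Bs n b \<inter> (W' \<inter> Bs n b) = {}"
    proof (intro ballI impI)
      fix W W' assume "W \<in> \<W>" "W' \<in> \<W>" "W \<noteq> W'"
      then obtain A A' where "A \<in> \<F>" "A' \<in> \<F>" "W = fst A" "W' = fst A'" "A \<noteq> A'"
        by (auto simp: \<W>_def)
      then have "W \<inter> W' = {}" using dis by blast
      then show "W \<inter> Bs n b \<inter> (W' \<inter> Bs n b) = {}" by blast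
    qed
  qed
  then have "card (Bs n b) = (\<Sum>W\<in>\<W>. card (W \<inter> Bs n b))" using BU by simp
  moreover have "m dvd (\<Sum>W\<in>\<W>. card (W \<inter> Bs n b))"
  proof (rule dvd_sum)
    fix W assume "W \<in> \<W>"
    then obtain F where "Kk_copy k m (Vp n) (Eg k n t b) W F" using Wc by blast
    then show "m dvd card (W \<inter> Bs n b)" by (rule copy_dvd[OF k m])
  qed
  moreover have "card (Bs n b) = b" unfolding Bs_def by (rule cnt_eps_neg[OF bn])
  ultimately show False using nd by simp
qed

lemma arithH:
  fixes \<mu> N d q n :: real
  assumes mu: "0 < \<mu>" and N: "16 / \<mu>^2 \<le> N" and dN: "N / 2 \<le> d" and q: "1 \<le> q"
    and qd: "q * d \<le> n" and d: "0 < d"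
  shows "N * (q + 1)^2 \<le> \<mu>^2 * n^2"
proof -
  have m2: "0 < \<mu>^2" using mu by simp
  have muN: "16 \<le> \<mu>^2 * N" using N m2 by (simp add: divide_le_eq mult.commute)
  have "0 < 16 / \<mu>^2" using m2 by simp
  then have Npos: "0 < N" using N by linarith
  have "(q + 1)^2 \<le> (2 * q)^2" using q by (intro power_mono) auto
  then have q1: "(q + 1)^2 \<le> 4 * q^2" by (simp add: power_mult_distrib)
  have qd0: "0 \<le> q * d" using q d by simp
  have n2: "(q * d)^2 \<le> n^2" by (rule power_mono[OF qd qd0])
  have qdN: "(q * (N / 2))^2 \<le> (q * d)^2"
    using dN q Npos by (intro power_mono mult_left_mono) auto
  have "N * (q + 1)^2 \<le> N * (4 * q^2)" using q1 Npos by simp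
  also have "\<dots> = (16 * N) * (q * (N/2))^2 / (N * N)" using Npos by (simp add: power2_eq_square field_simps)
  also have "\<dots> \<le> (\<mu>^2 * N * N) * (q * (N/2))^2 / (N * N)"
    using muN Npos by (intro divide_right_mono mult_right_mono) (auto simp: mult.assoc)
  also have "\<dots> = \<mu>^2 * (q * (N/2))^2" using Npos by simp
  also have "\<dots> \<le> \<mu>^2 * n^2" using qdN n2 m2 by simp
  finally show ?thesis .
qed

lemma arithR:
  fixes \<mu> d q n :: real
  assumes mu: "0 < \<mu>" and d1: "1 / \<mu> \<le> d" and d: "0 < d" and qd: "q * d \<le> n" and dn: "d \<le> \<mu> * n"
    and q: "0 \<le> q"
  shows "q + d \<le> 2 * \<mu> * n"
proof -
  have "1 \<le> \<mu> * d" using d1 mu by (simp add: divide_le_eq mult.commute)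
  then have "q \<le> q * (\<mu> * d)" using q by (simp add: mult_le_cancel_left1)
  also have "\<dots> = \<mu> * (q * d)" by simp
  also have "\<dots> \<le> \<mu> * n" using qd mu by simp
  finally show ?thesis using dn by simp
qed

theorem theorem1p2:
  fixes k m :: nat and \<mu> :: real
  assumes "k \<ge> 3" and "m \<ge> 2" and "\<mu> > 0"
  shows "\<exists>n0::nat. \<forall>n\<ge>n0. \<exists>(V :: nat \<Rightarrow> nat set) (E :: nat set set).
           kpartite_kgraph k V E \<and> (\<forall>i<k. card (V i) = n) \<and>
           dense k V E (1/2) \<mu> \<and>
           real (partite_min_deg k V E (k - 1)) \<ge> (1/2 - \<mu>) * real n \<and>
           \<not> has_Kk_factor k m V E"
proof -
  have k: "3 \<le> k" and m2: "2 \<le> m" and mu: "0 < \<mu>" using assms by auto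
  have m0: "0 < m" using m2 by simp
  obtain t0 :: nat where t0: "16 / \<mu>^2 + 1 / \<mu> + 2 < real t0" using reals_Archimedean2 by blast
  define t where "t = Suc t0"
  have t1: "1 \<le> t" by (simp add: t_def)
  define N :: nat where "N = 2^t"
  have "t0 < 2^t0" by (rule less_exp)
  moreover have "(2::nat)^t0 \<le> 2^t" by (simp add: t_def)
  ultimately have "t0 < N" unfolding N_def by linarith
  then have NX: "16 / \<mu>^2 + 1 / \<mu> + 2 < real N" using t0 by linarith
  have p1: "0 \<le> 16 / \<mu>^2" "0 < 1 / \<mu>" using mu by auto
  have N2: "2 \<le> N" using NX p1 by linarith
  define d :: nat where "d = N - 1"
  have rd: "real d = real N - 1" using N2 by (simp add: d_def of_nat_diff)
  have d0: "0 < d" using N2 by (simp add: d_def)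
  have dmu: "1 / \<mu> \<le> real d" using NX p1 rd by linarith
  have dN: "real N / 2 \<le> real d" using N2 rd by linarith
  have N16: "16 / \<mu>^2 \<le> real N" using NX p1 by linarith
  have RN: "real N = (2::real)^t" by (simp add: N_def)
  define n0 :: nat where "n0 = N + nat \<lceil>real d / \<mu>\<rceil> + nat \<lceil>2 / \<mu>\<rceil> + 2"
  show ?thesis
  proof (intro exI[of _ n0] allI impI)
    fix n assume nn0: "n0 \<le> n"
    have nN: "N \<le> n" using nn0 by (simp add: n0_def)
    have nd: "d \<le> n" using nN by (simp add: d_def)
    have n2: "2 \<le> n" using nn0 by (simp add: n0_def)
    have n0': "0 < n" using n2 by simp
    have "real d / \<mu> \<le> real (nat \<lceil>real d / \<mu>\<rceil>)" by linarith
    also have "\<dots> \<le> real n"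
    proof -
      have "nat \<lceil>real d / \<mu>\<rceil> \<le> n" using nn0 unfolding n0_def by linarith
      then show ?thesis by (rule of_nat_mono)
    qed
    finally have ndmu: "real d \<le> \<mu> * real n" using mu by (simp add: divide_le_eq mult.commute)
    have "2 / \<mu> \<le> real (nat \<lceil>2 / \<mu>\<rceil>)" by linarith
    also have "\<dots> \<le> real n"
    proof -
      have "nat \<lceil>2 / \<mu>\<rceil> \<le> n" using nn0 unfolding n0_def by linarith
      then show ?thesis by (rule of_nat_mono)
    qed
    finally have mun: "2 \<le> \<mu> * real n" using mu by (simp add: divide_le_eq mult.commute)
    define q :: nat where "q = n div d"
    have qd: "real q * real d \<le> real n"
    proof -
      have "q * d \<le> n" by (simp add: q_def)
      then show ?thesis by (metis of_nat_le_iff of_nat_mult)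
    qed
    have q1: "1 \<le> q"
    proof -
      have "d div d \<le> n div d" using nd by (rule div_le_mono)
      then show ?thesis using d0 by (simp add: q_def)
    qed
    have dt: "2^t - 1 = d" by (simp add: d_def N_def)
    have H: "2^t * (real (n div (2^t-1)) + 1)^2 \<le> \<mu>^2 * real n ^ 2"
    proof -
      have "real N * (real q + 1)^2 \<le> \<mu>^2 * (real n)^2"
        by (rule arithH[OF mu N16 dN]) (use q1 qd d0 in auto)
      then show ?thesis unfolding dt q_def[symmetric] RN by simp
    qed
    have R: "real (n div (2^t-1)) + real (2^t-1) \<le> 2 * \<mu> * real n"
    proof -
      have "real q + real d \<le> 2 * \<mu> * real n"
        by (rule arithR[OF mu dmu _ qd ndmu]) (use d0 in auto)
      then show ?thesis unfolding dt q_def[symmetric] by simp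
    qed
    define b where "b = (if m dvd (n div 2) then n div 2 + 1 else n div 2)"
    have bn: "b \<le> n" using n2 by (auto simp: b_def)
    have nmb: "\<not> m dvd b"
    proof
      assume mb: "m dvd b"
      show False
      proof (cases "m dvd (n div 2)")
        case True
        then have "m dvd n div 2 + 1" using mb by (simp add: b_def)
        then have "m dvd 1" using dvd_add_right_iff[OF True, of 1] by blast
        then show False using m2 by simp
      next
        case False then show False using mb by (simp add: b_def)
      qed
    qed
    have hb: "real (n div 2) \<ge> real n / 2 - 1/2" by linarith
    have hb2: "real (n div 2) \<le> real n / 2" by linarith
    have B1: "(1/2 - \<mu>) * real n \<le> real b"
    proof -
      have "real b \<ge> real (n div 2)" by (simp add: b_def)
      then show ?thesis using hb mun by (simp add: algebra_simps; linarith)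
    qed
    have B2: "(1/2 - \<mu>) * real n \<le> real n - real b"
    proof -
      have "real b \<le> real (n div 2) + 1" by (simp add: b_def)
      then show ?thesis using hb2 mun by (simp add: algebra_simps; linarith)
    qed
    show "\<exists>(V :: nat \<Rightarrow> nat set) (E :: nat set set).
           kpartite_kgraph k V E \<and> (\<forall>i<k. card (V i) = n) \<and>
           dense k V E (1/2) \<mu> \<and>
           real (partite_min_deg k V E (k - 1)) \<ge> (1/2 - \<mu>) * real n \<and>
           \<not> has_Kk_factor k m V E"
    proof (intro exI conjI)
      show "kpartite_kgraph k (Vp n) (Eg k n t b)" by (rule kp)
      show "\<forall>i<k. card (Vp n i) = n" by (simp add: card_Vp)
      show "dense k (Vp n) (Eg k n t b) (1/2) \<mu>" by (rule dens[OF n0' k t1 mu H])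
      show "(1/2 - \<mu>) * real n \<le> real (partite_min_deg k (Vp n) (Eg k n t b) (k - 1))"
        by (rule codeg[OF n0' k t1 R B1 B2 bn])
      show "\<not> has_Kk_factor k m (Vp n) (Eg k n t b)" by (rule nofactor[OF n0' k m0 nmb bn])
    qed
  qed
qed


end
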